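(* Let $R$ be an artinian ring and $\mathcal{S}$ a full subcategory of $\operatorname{Mod}R$ which is closed under direct sums and submodules and contains $R_R$, such that $\mathcal{S}$ has only finitely many indecomposable finitely generated objects up to isomorphism, say $M_1,\dots,M_n$. Let $M=M_1\oplus\cdots\oplus M_n$, $X\in\mathcal{S}$, $H=\operatorname{Hom}_R(M,X)$, and let $p:M^{(H)}\to X$ be the map $(m_h)_{h\in H}\mapsto\sum_{h\in H}h(m_h)$ (which is an epimorphism), with kernel $K$. Then the short exact sequence $0\to K\to M^{(H)}\xrightarrow{p}X\to0$ is pure exact.
   Context: A short exact sequence $0\to A\xrightarrow{f}B\xrightarrow{g}C\to0$ of right $R$-modules is pure exact if $\operatorname{Hom}_R(N,g)$ is surjective for every finitely presented right $R$-module $N$ (equivalently, $f\otimes_R 1_Y$ is injective for every left $R$-module $Y$). $M^{(H)}$ denotes the direct sum of copies of $M$ indexed by $H$. *)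

theory Defs
  imports "HOL-Algebra.Module" "HOL-Library.FuncSet"
begin

text \<open>We reuse the HOL-Algebra module record; the field smult M r x denotes the
  RIGHT action x r. Only the additive structure and smult of the record are used.\<close>

definition rmodule :: "('r,'z) ring_scheme \<Rightarrow> ('r,'a) module \<Rightarrow> bool" where
  "rmodule R M \<longleftrightarrow> ring R \<and> abelian_group M \<and>
    (\<forall>r\<in>carrier R. \<forall>x\<in>carrier M. smult M r x \<in> carrier M) \<and>
    (\<forall>r\<in>carrier R. \<forall>x\<in>carrier M. \<forall>y\<in>carrier M.
        smult M r (x \<oplus>\<^bsub>M\<^esub> y) = smult M r x \<oplus>\<^bsub>M\<^esub> smult M r y) \<and>
    (\<forall>r\<in>carrier R. \<forall>s\<in>carrier R. \<forall>x\<in>carrier M.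
        smult M (r \<oplus>\<^bsub>R\<^esub> s) x = smult M r x \<oplus>\<^bsub>M\<^esub> smult M s x) \<and>
    (\<forall>r\<in>carrier R. \<forall>s\<in>carrier R. \<forall>x\<in>carrier M.
        smult M (r \<otimes>\<^bsub>R\<^esub> s) x = smult M s (smult M r x)) \<and>
    (\<forall>x\<in>carrier M. smult M \<one>\<^bsub>R\<^esub> x = x)"

text \<open>R-linear maps (extensional, so that Hom is a genuine set of maps).\<close>
definition rhom :: "('r,'z) ring_scheme \<Rightarrow> ('r,'a) module \<Rightarrow> ('r,'b) module \<Rightarrow> ('a \<Rightarrow> 'b) set" where
  "rhom R M N = {f. f \<in> carrier M \<rightarrow>\<^sub>E carrier N \<and>
     (\<forall>x\<in>carrier M. \<forall>y\<in>carrier M. f (x \<oplus>\<^bsub>M\<^esub> y) = f x \<oplus>\<^bsub>N\<^esub> f y) \<and>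
     (\<forall>r\<in>carrier R. \<forall>x\<in>carrier M. f (smult M r x) = smult N r (f x))}"

definition riso :: "('r,'z) ring_scheme \<Rightarrow> ('r,'a) module \<Rightarrow> ('r,'b) module \<Rightarrow> bool" where
  "riso R M N \<longleftrightarrow> (\<exists>f\<in>rhom R M N. bij_betw f (carrier M) (carrier N))"

definition rsubmodule :: "('r,'z) ring_scheme \<Rightarrow> ('r,'a) module \<Rightarrow> 'a set \<Rightarrow> bool" where
  "rsubmodule R M A \<longleftrightarrow> A \<subseteq> carrier M \<and> \<zero>\<^bsub>M\<^esub> \<in> A \<and>
     (\<forall>x\<in>A. \<forall>y\<in>A. x \<oplus>\<^bsub>M\<^esub> y \<in> A) \<and> (\<forall>x\<in>A. \<ominus>\<^bsub>M\<^esub> x \<in> A) \<and>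
     (\<forall>r\<in>carrier R. \<forall>x\<in>A. smult M r x \<in> A)"

definition rspan :: "('r,'z) ring_scheme \<Rightarrow> ('r,'a) module \<Rightarrow> 'a set \<Rightarrow> 'a set" where
  "rspan R M G = {finsum M (\<lambda>g. smult M (c g) g) G | c. c \<in> G \<rightarrow> carrier R}"

definition rfg :: "('r,'z) ring_scheme \<Rightarrow> ('r,'a) module \<Rightarrow> bool" where
  "rfg R M \<longleftrightarrow> (\<exists>G. finite G \<and> G \<subseteq> carrier M \<and> rspan R M G = carrier M)"

definition dsum :: "('r,'z) ring_scheme \<Rightarrow> 'i set \<Rightarrow> ('i \<Rightarrow> ('r,'a) module) \<Rightarrow> ('r, 'i \<Rightarrow> 'a) module" where
  "dsum R I A = \<lparr>carrier = {f. f \<in> (\<Pi>\<^sub>E i\<in>I. carrier (A i)) \<and> finite {i\<in>I. f i \<noteq> \<zero>\<^bsub>A i\<^esub>}},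
     mult = (\<lambda>f g. undefined), one = undefined,
     zero = (\<lambda>i\<in>I. \<zero>\<^bsub>A i\<^esub>),
     add = (\<lambda>f g. \<lambda>i\<in>I. f i \<oplus>\<^bsub>A i\<^esub> g i),
     smult = (\<lambda>r f. \<lambda>i\<in>I. smult (A i) r (f i))\<rparr>"

definition RR :: "'r ring \<Rightarrow> ('r,'r) module" where
  "RR R = \<lparr>carrier = carrier R, mult = mult R, one = one R, zero = zero R, add = add R,
           smult = (\<lambda>r x. x \<otimes>\<^bsub>R\<^esub> r)\<rparr>"

definition rfp :: "'r ring \<Rightarrow> ('r,'a) module \<Rightarrow> bool" where
  "rfp R N \<longleftrightarrow> rmodule R N \<and> (\<exists>G. finite G \<and> G \<subseteq> carrier N \<and> rspan R N G = carrier N \<and>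
     rfg R ((dsum R G (\<lambda>_. RR R))\<lparr>carrier :=
        {c \<in> carrier (dsum R G (\<lambda>_. RR R)). finsum N (\<lambda>g. smult N (c g) g) G = \<zero>\<^bsub>N\<^esub>}\<rparr>))"

definition indecomposable :: "('r,'z) ring_scheme \<Rightarrow> ('r,'a) module \<Rightarrow> bool" where
  "indecomposable R M \<longleftrightarrow> carrier M \<noteq> {\<zero>\<^bsub>M\<^esub>} \<and>
    (\<forall>A B. rsubmodule R M A \<and> rsubmodule R M B \<and> A \<inter> B = {\<zero>\<^bsub>M\<^esub>} \<and>
       (\<forall>x\<in>carrier M. \<exists>a\<in>A. \<exists>b\<in>B. x = a \<oplus>\<^bsub>M\<^esub> b) \<longrightarrow> A = {\<zero>\<^bsub>M\<^esub>} \<or> B = {\<zero>\<^bsub>M\<^esub>})"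

definition left_ideal :: "'r ring \<Rightarrow> 'r set \<Rightarrow> bool" where
  "left_ideal R A \<longleftrightarrow> A \<subseteq> carrier R \<and> \<zero>\<^bsub>R\<^esub> \<in> A \<and>
     (\<forall>x\<in>A. \<forall>y\<in>A. x \<oplus>\<^bsub>R\<^esub> y \<in> A) \<and> (\<forall>x\<in>A. \<ominus>\<^bsub>R\<^esub> x \<in> A) \<and>
     (\<forall>r\<in>carrier R. \<forall>x\<in>A. r \<otimes>\<^bsub>R\<^esub> x \<in> A)"

definition right_ideal :: "'r ring \<Rightarrow> 'r set \<Rightarrow> bool" where
  "right_ideal R A \<longleftrightarrow> rsubmodule R (RR R) A"

definition DCC :: "('r set \<Rightarrow> bool) \<Rightarrow> bool" where
  "DCC P \<longleftrightarrow> (\<forall>C :: nat \<Rightarrow> 'r set. (\<forall>k. P (C k)) \<and> (\<forall>k. C (Suc k) \<subseteq> C k) \<longrightarrow>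
                (\<exists>k. \<forall>j\<ge>k. C j = C k))"

definition artinian_ring :: "'r ring \<Rightarrow> bool" where
  "artinian_ring R \<longleftrightarrow> ring R \<and> DCC (right_ideal R) \<and> DCC (left_ideal R)"

end

theory Submission
  imports Defs
begin

locale rmod =
  fixes R :: "'r ring" and X :: "('r,'a) module" (structure)
  assumes rm: "rmodule R X"
begin

lemma ringR: "ring R" using rm by (simp add: rmodule_def)
lemma agX: "abelian_group X" using rm by (simp add: rmodule_def)
sublocale abelian_group X by (rule agX)
sublocale R: ring R by (rule ringR)

lemma sm_closed[simp]: "r \<in> carrier R \<Longrightarrow> x \<in> carrier X \<Longrightarrow> smult X r x \<in> carrier X"
  using rm by (simp add: rmodule_def)
lemma sm_add: "r \<in> carrier R \<Longrightarrow> x \<in> carrier X \<Longrightarrow> y \<in> carrier X \<Longrightarrow> smult X r (x \<oplus> y) = smult X r x \<oplus> smult X r y"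
  using rm by (simp add: rmodule_def)
lemma sm_radd: "r \<in> carrier R \<Longrightarrow> s \<in> carrier R \<Longrightarrow> x \<in> carrier X \<Longrightarrow> smult X (r \<oplus>\<^bsub>R\<^esub> s) x = smult X r x \<oplus> smult X s x"
  using rm by (simp add: rmodule_def)
lemma sm_mult: "r \<in> carrier R \<Longrightarrow> s \<in> carrier R \<Longrightarrow> x \<in> carrier X \<Longrightarrow> smult X (r \<otimes>\<^bsub>R\<^esub> s) x = smult X s (smult X r x)"
  using rm by (simp add: rmodule_def)
lemma sm_one[simp]: "x \<in> carrier X \<Longrightarrow> smult X \<one>\<^bsub>R\<^esub> x = x"
  using rm by (simp add: rmodule_def)

lemma sm_rzero[simp]: "x \<in> carrier X \<Longrightarrow> smult X \<zero>\<^bsub>R\<^esub> x = \<zero>"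
proof -
  assume x: "x \<in> carrier X"
  have "smult X \<zero>\<^bsub>R\<^esub> x \<oplus> smult X \<zero>\<^bsub>R\<^esub> x = smult X \<zero>\<^bsub>R\<^esub> x \<oplus> \<zero>"
    using sm_radd[of "\<zero>\<^bsub>R\<^esub>" "\<zero>\<^bsub>R\<^esub>" x] x by simp
  then show ?thesis using x by (metis add.l_cancel_one sm_closed R.zero_closed r_zero)
qed

lemma sm_zero[simp]: "r \<in> carrier R \<Longrightarrow> smult X r \<zero> = \<zero>"
proof -
  assume r: "r \<in> carrier R"
  have "smult X r \<zero> \<oplus> smult X r \<zero> = smult X r \<zero> \<oplus> \<zero>"
    using sm_add[of r "\<zero>" "\<zero>"] r by simp
  then show ?thesis using r by (metis add.l_cancel_one sm_closed zero_closed r_zero)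
qed

lemma sm_rneg: "r \<in> carrier R \<Longrightarrow> x \<in> carrier X \<Longrightarrow> smult X (\<ominus>\<^bsub>R\<^esub> r) x = \<ominus> smult X r x"
proof -
  assume r: "r \<in> carrier R" and x: "x \<in> carrier X"
  have "smult X r x \<oplus> smult X (\<ominus>\<^bsub>R\<^esub> r) x = \<zero>"
    using sm_radd[of r "\<ominus>\<^bsub>R\<^esub> r" x] r x by (simp add: R.r_neg)
  then show ?thesis using r x
    by (metis R.a_inv_closed sm_closed minus_equality a_comm)
qed

lemma sm_neg: "r \<in> carrier R \<Longrightarrow> x \<in> carrier X \<Longrightarrow> smult X r (\<ominus> x) = \<ominus> smult X r x"
proof -
  assume r: "r \<in> carrier R" and x: "x \<in> carrier X"
  have "smult X r x \<oplus> smult X r (\<ominus> x) = \<zero>"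
    using sm_add[of r x "\<ominus> x"] r x by (simp add: r_neg)
  then show ?thesis using r x
    by (metis a_inv_closed sm_closed minus_equality a_comm)
qed

lemma sm_finsum: "finite A \<Longrightarrow> f \<in> A \<rightarrow> carrier X \<Longrightarrow> r \<in> carrier R \<Longrightarrow>
   smult X r (finsum X f A) = finsum X (\<lambda>a. smult X r (f a)) A"
proof (induction A rule: finite_induct)
  case empty then show ?case by simp
next
  case (insert a A)
  then have fa: "f a \<in> carrier X" and fA: "f \<in> A \<rightarrow> carrier X" by auto
  have "finsum X f (insert a A) = f a \<oplus> finsum X f A" using insert fa fA by simp
  moreover have "finsum X (\<lambda>a. smult X r (f a)) (insert a A) = smult X r (f a) \<oplus> finsum X (\<lambda>a. smult X r (f a)) A"
    using insert fa fA by (subst finsum_insert) (auto simp: Pi_iff)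
  ultimately show ?case using insert fa fA by (simp add: sm_add)
qed

lemma submod_finsum: assumes "rsubmodule R X B" "finite A" "f \<in> A \<rightarrow> B" shows "finsum X f A \<in> B"
  using assms(2,3,1) proof (induction A rule: finite_induct)
  case empty then show ?case by (simp add: rsubmodule_def)
next
  case (insert a A)
  then have fa: "f a \<in> B" and fA: "f \<in> A \<rightarrow> B" by auto
  have BX: "B \<subseteq> carrier X" using insert by (simp add: rsubmodule_def)
  have "finsum X f (insert a A) = f a \<oplus> finsum X f A" using insert fa fA BX by (subst finsum_insert) auto
  then show ?case using insert fa fA by (simp add: rsubmodule_def)
qed


lemma span_closed: "finite G \<Longrightarrow> G \<subseteq> carrier X \<Longrightarrow> c \<in> G \<rightarrow> carrier R \<Longrightarrow>
   finsum X (\<lambda>g. smult X (c g) g) G \<in> carrier X"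
  by (intro finsum_closed) (auto simp: Pi_iff subset_iff)

lemma rspan_memI: "c \<in> G \<rightarrow> carrier R \<Longrightarrow> x = finsum X (\<lambda>g. smult X (c g) g) G \<Longrightarrow> x \<in> rspan R X G"
  unfolding rspan_def by blast

lemma span_sub: assumes G: "finite G" "G \<subseteq> carrier X" shows "rsubmodule R X (rspan R X G)"
  unfolding rsubmodule_def
proof (intro conjI ballI)
  show "rspan R X G \<subseteq> carrier X" using G span_closed by (auto simp: rspan_def)
  have "finsum X (\<lambda>g. smult X ((\<lambda>_. \<zero>\<^bsub>R\<^esub>) g) g) G = \<zero>"
    using G by (intro add.finprod_one_eqI) (auto simp: subset_iff)
  then show "\<zero> \<in> rspan R X G" unfolding rspan_def mem_Collect_eq
    by (intro exI[of _ "\<lambda>_. \<zero>\<^bsub>R\<^esub>"]) auto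
next
  fix x y assume "x \<in> rspan R X G" "y \<in> rspan R X G"
  then obtain c d where c: "c \<in> G \<rightarrow> carrier R" "x = finsum X (\<lambda>g. smult X (c g) g) G"
    and d: "d \<in> G \<rightarrow> carrier R" "y = finsum X (\<lambda>g. smult X (d g) g) G"
    by (auto simp: rspan_def)
  have "x \<oplus> y = finsum X (\<lambda>g. smult X (c g) g \<oplus> smult X (d g) g) G"
    using c d G by (subst finsum_addf) (auto simp: Pi_iff subset_iff)
  also have "\<dots> = finsum X (\<lambda>g. smult X ((\<lambda>g. c g \<oplus>\<^bsub>R\<^esub> d g) g) g) G"
    using c d G by (intro finsum_cong') (auto simp: sm_radd Pi_iff subset_iff)
  finally show "x \<oplus> y \<in> rspan R X G" by (rule rspan_memI[rotated]) (use c d in auto)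
next
  fix x assume "x \<in> rspan R X G"
  then obtain c where c: "c \<in> G \<rightarrow> carrier R" "x = finsum X (\<lambda>g. smult X (c g) g) G"
    by (auto simp: rspan_def)
  have "\<ominus> x = smult X (\<ominus>\<^bsub>R\<^esub> \<one>\<^bsub>R\<^esub>) x"
    using c G span_closed by (simp add: sm_rneg)
  also have "\<dots> = finsum X (\<lambda>g. smult X (\<ominus>\<^bsub>R\<^esub> \<one>\<^bsub>R\<^esub>) (smult X (c g) g)) G"
    using c G by (simp only: c(2), subst sm_finsum) (auto simp: Pi_iff subset_iff)
  also have "\<dots> = finsum X (\<lambda>g. smult X ((\<lambda>g. c g \<otimes>\<^bsub>R\<^esub> (\<ominus>\<^bsub>R\<^esub> \<one>\<^bsub>R\<^esub>)) g) g) G"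
    using c G by (intro finsum_cong') (auto simp: sm_mult Pi_iff subset_iff)
  finally show "\<ominus> x \<in> rspan R X G" by (rule rspan_memI[rotated]) (use c in auto)
next
  fix r x assume r: "r \<in> carrier R" and "x \<in> rspan R X G"
  then obtain c where c: "c \<in> G \<rightarrow> carrier R" "x = finsum X (\<lambda>g. smult X (c g) g) G"
    by (auto simp: rspan_def)
  have "smult X r x = finsum X (\<lambda>g. smult X r (smult X (c g) g)) G"
    using c G r by (simp only: c(2), subst sm_finsum) (auto simp: Pi_iff subset_iff)
  also have "\<dots> = finsum X (\<lambda>g. smult X ((\<lambda>g. c g \<otimes>\<^bsub>R\<^esub> r) g) g) G"
    using c G r by (intro finsum_cong') (auto simp: sm_mult Pi_iff subset_iff)
  finally show "smult X r x \<in> rspan R X G" by (rule rspan_memI[rotated]) (use c r in auto)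
qed

lemma span_gen: assumes G: "finite G" "G \<subseteq> carrier X" "x \<in> G" shows "x \<in> rspan R X G"
proof -
  let ?c = "\<lambda>g. if x = g then \<one>\<^bsub>R\<^esub> else \<zero>\<^bsub>R\<^esub>"
  have "finsum X (\<lambda>g. smult X (?c g) g) G = finsum X (\<lambda>g. if x = g then g else \<zero>) G"
    using G by (intro finsum_cong') (auto simp: Pi_iff subset_iff)
  also have "\<dots> = x" using G by (intro finsum_singleton) (auto simp: Pi_iff subset_iff)
  finally show ?thesis unfolding rspan_def mem_Collect_eq
    by (intro exI[of _ ?c]) auto
qed

lemma span_least: assumes G: "finite G" and B: "rsubmodule R X B" "G \<subseteq> B"
  shows "rspan R X G \<subseteq> B"
proof
  fix x assume "x \<in> rspan R X G"
  then obtain c where c: "c \<in> G \<rightarrow> carrier R" "x = finsum X (\<lambda>g. smult X (c g) g) G"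
    by (auto simp: rspan_def)
  show "x \<in> B" unfolding c(2) using B c G
    by (intro submod_finsum) (auto simp: rsubmodule_def Pi_iff subset_iff)
qed

lemma submod_sum: assumes A: "rsubmodule R X A" and B: "rsubmodule R X B"
  shows "rsubmodule R X {a \<oplus> b | a b. a \<in> A \<and> b \<in> B}"
  unfolding rsubmodule_def
proof (intro conjI ballI)
  have AX: "A \<subseteq> carrier X" and BX: "B \<subseteq> carrier X" using A B by (auto simp: rsubmodule_def)
  show "{a \<oplus> b | a b. a \<in> A \<and> b \<in> B} \<subseteq> carrier X" using AX BX by auto
  show "\<zero> \<in> {a \<oplus> b | a b. a \<in> A \<and> b \<in> B}" using A B
    by (auto simp: rsubmodule_def intro!: exI[of _ \<zero>])
  fix x y assume "x \<in> {a \<oplus> b | a b. a \<in> A \<and> b \<in> B}" "y \<in> {a \<oplus> b | a b. a \<in> A \<and> b \<in> B}"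
  then obtain a b a' b' where ab: "a \<in> A" "b \<in> B" "x = a \<oplus> b" "a' \<in> A" "b' \<in> B" "y = a' \<oplus> b'"
    by auto
  have "a \<in> carrier X" "a' \<in> carrier X" "b \<in> carrier X" "b' \<in> carrier X" using ab AX BX by auto
  then have "x \<oplus> y = (a \<oplus> a') \<oplus> (b \<oplus> b')" using ab by (simp add: a_ac)
  moreover have "a \<oplus> a' \<in> A" "b \<oplus> b' \<in> B" using A B ab by (auto simp: rsubmodule_def)
  ultimately show "x \<oplus> y \<in> {a \<oplus> b | a b. a \<in> A \<and> b \<in> B}" by blast
next
  have AX: "A \<subseteq> carrier X" and BX: "B \<subseteq> carrier X" using A B by (auto simp: rsubmodule_def)
  fix x assume "x \<in> {a \<oplus> b | a b. a \<in> A \<and> b \<in> B}"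
  then obtain a b where ab: "a \<in> A" "b \<in> B" "x = a \<oplus> b" by auto
  have "\<ominus> x = \<ominus> a \<oplus> \<ominus> b" using ab AX BX by (simp add: minus_add subsetD)
  moreover have "\<ominus> a \<in> A" "\<ominus> b \<in> B" using A B ab by (auto simp: rsubmodule_def)
  ultimately show "\<ominus> x \<in> {a \<oplus> b | a b. a \<in> A \<and> b \<in> B}" by blast
next
  have AX: "A \<subseteq> carrier X" and BX: "B \<subseteq> carrier X" using A B by (auto simp: rsubmodule_def)
  fix r x assume r: "r \<in> carrier R" and "x \<in> {a \<oplus> b | a b. a \<in> A \<and> b \<in> B}"
  then obtain a b where ab: "a \<in> A" "b \<in> B" "x = a \<oplus> b" by auto
  have "smult X r x = smult X r a \<oplus> smult X r b" using ab AX BX r by (simp add: sm_add subsetD)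
  moreover have "smult X r a \<in> A" "smult X r b \<in> B" using A B ab r by (auto simp: rsubmodule_def)
  ultimately show "smult X r x \<in> {a \<oplus> b | a b. a \<in> A \<and> b \<in> B}" by blast
qed

lemma submod_int: "rsubmodule R X A \<Longrightarrow> rsubmodule R X B \<Longrightarrow> rsubmodule R X (A \<inter> B)"
  unfolding rsubmodule_def by auto

end

lemma RR_ainv: "a_inv (RR R) x = a_inv R x"
  unfolding a_inv_def m_inv_def by (simp add: RR_def)
lemma wf_ideals: assumes "DCC (right_ideal R)"
  shows "wf {(I,J). I \<subset> J \<and> right_ideal R I \<and> right_ideal R J}"
proof (rule ccontr)
  assume "\<not> ?thesis"
  then have "\<exists>f. \<forall>i. (f (Suc i), f i) \<in> {(I,J). I \<subset> J \<and> right_ideal R I \<and> right_ideal R J}"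
    unfolding wf_iff_no_infinite_down_chain by (rule notnotD)
  then obtain f where f: "\<forall>i. (f (Suc i), f i) \<in> {(I,J). I \<subset> J \<and> right_ideal R I \<and> right_ideal R J}"
    by (rule exE)
  have r1: "\<forall>k. right_ideal R (f k)" using f by simp
  have r2: "\<forall>k. f (Suc k) \<subseteq> f k" using f by auto
  have dcc: "\<forall>C :: nat \<Rightarrow> 'a set. (\<forall>k. right_ideal R (C k)) \<and> (\<forall>k. C (Suc k) \<subseteq> C k) \<longrightarrow>
                (\<exists>k. \<forall>j\<ge>k. C j = C k)" using assms unfolding DCC_def .
  from dcc[rule_format, OF conjI[OF r1 r2]] obtain k where "\<forall>j\<ge>k. f j = f k" by (rule exE)
  then have "f (Suc k) = f k" using le_SucI[OF order_refl] by blast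
  moreover have "f (Suc k) \<subset> f k" using f by simp
  ultimately show False by simp
qed

context rmod begin

lemma rspanE: assumes "x \<in> rspan R X G"
  obtains c where "c \<in> G \<rightarrow> carrier R" "x = finsum X (\<lambda>g. smult X (c g) g) G"
  using assms unfolding rspan_def by auto

definition subrel :: "'a set \<Rightarrow> ('a set \<times> 'a set) set" where
  "subrel Y = {(A,B). A \<subset> B \<and> rsubmodule R X A \<and> rsubmodule R X B \<and> B \<subseteq> Y}"

lemma wf_span: assumes D: "DCC (right_ideal R)"
  shows "finite G \<Longrightarrow> G \<subseteq> carrier X \<Longrightarrow> wf (subrel (rspan R X G))"
proof (induction G rule: finite_induct)
  case empty
  have "rspan R X {} = {\<zero>}" by (simp add: rspan_def)
  then have "subrel (rspan R X {}) = {}" unfolding subrel_def rsubmodule_def by auto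
  then show ?case by simp
next
  case (insert y G)
  let ?Y' = "rspan R X G"
  let ?Y = "rspan R X (insert y G)"
  have yX: "y \<in> carrier X" and GX: "G \<subseteq> carrier X" using insert by auto
  have Y'sub: "rsubmodule R X ?Y'" using insert GX by (intro span_sub) auto
  have IH: "wf (subrel ?Y')" using insert GX by auto
  define T where "T A = {a \<oplus> b | a b. a \<in> A \<and> b \<in> ?Y'}" for A
  define F where "F A = ({r \<in> carrier R. smult X r y \<in> T A}, A \<inter> ?Y')" for A
  have Tsub: "rsubmodule R X (T A)" if "rsubmodule R X A" for A
    unfolding T_def using that Y'sub by (rule submod_sum)
  have Fid: "right_ideal R (fst (F A))" if A: "rsubmodule R X A" for A
  proof -
    note TA = Tsub[OF A]
    show ?thesis unfolding right_ideal_def rsubmodule_def F_def fst_conv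
    proof (intro conjI ballI)
      show "{r \<in> carrier R. smult X r y \<in> T A} \<subseteq> carrier (RR R)" by (auto simp: RR_def)
      show "\<zero>\<^bsub>RR R\<^esub> \<in> {r \<in> carrier R. smult X r y \<in> T A}"
        using TA yX by (auto simp: RR_def rsubmodule_def)
    next
      fix r s assume "r \<in> {r \<in> carrier R. smult X r y \<in> T A}" "s \<in> {r \<in> carrier R. smult X r y \<in> T A}"
      then show "r \<oplus>\<^bsub>RR R\<^esub> s \<in> {r \<in> carrier R. smult X r y \<in> T A}"
        using TA yX by (auto simp: RR_def rsubmodule_def sm_radd)
    next
      fix r assume "r \<in> {r \<in> carrier R. smult X r y \<in> T A}"
      then show "\<ominus>\<^bsub>RR R\<^esub> r \<in> {r \<in> carrier R. smult X r y \<in> T A}"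
        using TA yX by (auto simp: RR_ainv rsubmodule_def sm_rneg)
    next
      fix s r assume "s \<in> carrier R" "r \<in> {r \<in> carrier R. smult X r y \<in> T A}"
      then show "smult (RR R) s r \<in> {r \<in> carrier R. smult X r y \<in> T A}"
        using TA yX by (auto simp: RR_def rsubmodule_def sm_mult)
    qed
  qed
  have decomp: "\<exists>r\<in>carrier R. \<exists>z\<in>?Y'. b = smult X r y \<oplus> z" if bY: "b \<in> ?Y" for b
  proof -
    obtain c where c: "c \<in> insert y G \<rightarrow> carrier R" "b = finsum X (\<lambda>g. smult X (c g) g) (insert y G)"
      using bY by (rule rspanE)
    have cy: "c y \<in> carrier R" and cG: "c \<in> G \<rightarrow> carrier R" using c(1) by auto
    have yG: "y \<notin> G" and fG: "finite G" using insert.hyps by auto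
    have "finsum X (\<lambda>g. smult X (c g) g) (insert y G) = smult X (c y) y \<oplus> finsum X (\<lambda>g. smult X (c g) g) G"
      by (rule finsum_insert[OF fG yG]) (use cG cy yX GX in \<open>auto simp: Pi_iff subset_iff\<close>)
    then have b1: "b = smult X (c y) y \<oplus> finsum X (\<lambda>g. smult X (c g) g) G" using c(2) by simp
    have b2: "finsum X (\<lambda>g. smult X (c g) g) G \<in> ?Y'"
      by (rule rspan_memI[OF cG refl])
    show ?thesis using cy b1 b2 by blast
  qed
  have "subrel ?Y \<subseteq> inv_image ({(I,J). I \<subset> J \<and> right_ideal R I \<and> right_ideal R J} <*lex*> subrel ?Y') F"
  proof
    fix p assume "p \<in> subrel ?Y"
    then obtain A B where p: "p = (A,B)" and AB: "A \<subset> B" and A: "rsubmodule R X A"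
      and B: "rsubmodule R X B" and BY: "B \<subseteq> ?Y" unfolding subrel_def by auto
    have AX: "A \<subseteq> carrier X" and BX: "B \<subseteq> carrier X" using A B by (auto simp: rsubmodule_def)
    have Y'X: "?Y' \<subseteq> carrier X" using Y'sub by (auto simp: rsubmodule_def)
    have TAB: "T A \<subseteq> T B" using AB unfolding T_def by blast
    have I1: "fst (F A) \<subseteq> fst (F B)" using TAB unfolding F_def by auto
    have K1: "snd (F A) \<subseteq> snd (F B)" using AB unfolding F_def by auto
    have eq: "A = B" if e1: "fst (F A) = fst (F B)" and e2: "snd (F A) = snd (F B)"
    proof
      show "A \<subseteq> B" using AB by auto
      show "B \<subseteq> A"
      proof
        fix b assume b: "b \<in> B"
        then obtain r z where r: "r \<in> carrier R" and z: "z \<in> ?Y'" and bz: "b = smult X r y \<oplus> z"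
          using decomp BY by blast
        have zX: "z \<in> carrier X" using z Y'X by auto
        have bX: "b \<in> carrier X" using b BX by auto
        have "smult X r y = b \<oplus> \<ominus> z" using bz zX yX r
          by (simp add: a_assoc r_neg)
        moreover have "\<ominus> z \<in> ?Y'" using z Y'sub by (simp add: rsubmodule_def)
        ultimately have "smult X r y \<in> T B" unfolding T_def using b by blast
        then have "r \<in> fst (F B)" unfolding F_def using r by simp
        then have "r \<in> fst (F A)" using e1 by simp
        then obtain a w where a: "a \<in> A" and w: "w \<in> ?Y'" and aw: "smult X r y = a \<oplus> w"
          unfolding F_def T_def by auto
        have aX: "a \<in> carrier X" and wX: "w \<in> carrier X" using a AX w Y'X by auto
        have "b = a \<oplus> (w \<oplus> z)" using bz aw aX wX zX by (simp add: a_assoc)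
        moreover have wz: "w \<oplus> z \<in> ?Y'" using w z Y'sub by (simp add: rsubmodule_def)
        moreover have "w \<oplus> z \<in> B"
        proof -
          have "\<ominus> a \<oplus> b = (\<ominus> a \<oplus> a) \<oplus> (w \<oplus> z)" using \<open>b = a \<oplus> (w \<oplus> z)\<close> aX wX zX
            by (simp add: a_assoc)
          then have "w \<oplus> z = \<ominus> a \<oplus> b" using aX wX zX by (simp add: l_neg)
          moreover have "\<ominus> a \<in> B" using a AB B by (auto simp: rsubmodule_def)
          ultimately show ?thesis using b B by (simp add: rsubmodule_def)
        qed
        ultimately have "w \<oplus> z \<in> A" using e2 unfolding F_def by auto
        then show "b \<in> A" using \<open>b = a \<oplus> (w \<oplus> z)\<close> a A by (simp add: rsubmodule_def)
      qed
    qed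
    show "p \<in> inv_image ({(I,J). I \<subset> J \<and> right_ideal R I \<and> right_ideal R J} <*lex*> subrel ?Y') F"
    proof (cases "fst (F A) = fst (F B)")
      case False
      then show ?thesis using I1 Fid[OF A] Fid[OF B] p
        by (auto simp: inv_image_def lex_prod_def case_prod_beta)
    next
      case True
      then have "snd (F A) \<noteq> snd (F B)" using eq AB by auto
      moreover have "rsubmodule R X (snd (F A))" "rsubmodule R X (snd (F B))"
        unfolding F_def using A B Y'sub by (auto intro: submod_int)
      ultimately show ?thesis using True K1 p
        by (auto simp: inv_image_def lex_prod_def subrel_def case_prod_beta F_def)
    qed
  qed
  moreover have "wf (inv_image ({(I,J). I \<subset> J \<and> right_ideal R I \<and> right_ideal R J} <*lex*> subrel ?Y') F)"
    using wf_ideals[OF D] IH by (intro wf_inv_image wf_lex_prod)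
  ultimately show ?case by (rule wf_subset[rotated])
qed

end

lemma g_l_zero: assumes "abelian_group G" shows "x \<in> carrier G \<Longrightarrow> \<zero>\<^bsub>G\<^esub> \<oplus>\<^bsub>G\<^esub> x = x"
proof -
  interpret abelian_group G by fact
  show "x \<in> carrier G \<Longrightarrow> \<zero>\<^bsub>G\<^esub> \<oplus>\<^bsub>G\<^esub> x = x" by simp
qed

lemma g_zero_closed: assumes "abelian_group G" shows "\<zero>\<^bsub>G\<^esub> \<in> carrier G"
proof -
  interpret abelian_group G by fact
  show "\<zero>\<^bsub>G\<^esub> \<in> carrier G" by simp
qed

lemma g_a_closed: assumes "abelian_group G" shows "x \<in> carrier G \<Longrightarrow> y \<in> carrier G \<Longrightarrow> x \<oplus>\<^bsub>G\<^esub> y \<in> carrier G"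
proof -
  interpret abelian_group G by fact
  show "x \<in> carrier G \<Longrightarrow> y \<in> carrier G \<Longrightarrow> x \<oplus>\<^bsub>G\<^esub> y \<in> carrier G" by simp
qed

lemma g_a_assoc: assumes "abelian_group G" shows "x \<in> carrier G \<Longrightarrow> y \<in> carrier G \<Longrightarrow> z \<in> carrier G \<Longrightarrow> x \<oplus>\<^bsub>G\<^esub> y \<oplus>\<^bsub>G\<^esub> z = x \<oplus>\<^bsub>G\<^esub> (y \<oplus>\<^bsub>G\<^esub> z)"
proof -
  interpret abelian_group G by fact
  show "x \<in> carrier G \<Longrightarrow> y \<in> carrier G \<Longrightarrow> z \<in> carrier G \<Longrightarrow> x \<oplus>\<^bsub>G\<^esub> y \<oplus>\<^bsub>G\<^esub> z = x \<oplus>\<^bsub>G\<^esub> (y \<oplus>\<^bsub>G\<^esub> z)" by (simp add: a_assoc)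
qed

lemma g_a_comm: assumes "abelian_group G" shows "x \<in> carrier G \<Longrightarrow> y \<in> carrier G \<Longrightarrow> x \<oplus>\<^bsub>G\<^esub> y = y \<oplus>\<^bsub>G\<^esub> x"
proof -
  interpret abelian_group G by fact
  show "x \<in> carrier G \<Longrightarrow> y \<in> carrier G \<Longrightarrow> x \<oplus>\<^bsub>G\<^esub> y = y \<oplus>\<^bsub>G\<^esub> x" by (simp add: a_comm)
qed

lemma g_inv_closed: assumes "abelian_group G" shows "x \<in> carrier G \<Longrightarrow> \<ominus>\<^bsub>G\<^esub> x \<in> carrier G"
proof -
  interpret abelian_group G by fact
  show "x \<in> carrier G \<Longrightarrow> \<ominus>\<^bsub>G\<^esub> x \<in> carrier G" by simp
qed

lemma g_inv_zero: assumes "abelian_group G" shows "\<ominus>\<^bsub>G\<^esub> \<zero>\<^bsub>G\<^esub> = \<zero>\<^bsub>G\<^esub>"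
proof -
  interpret abelian_group G by fact
  show "\<ominus>\<^bsub>G\<^esub> \<zero>\<^bsub>G\<^esub> = \<zero>\<^bsub>G\<^esub>" by simp
qed

lemma g_l_neg: assumes "abelian_group G" shows "x \<in> carrier G \<Longrightarrow> \<ominus>\<^bsub>G\<^esub> x \<oplus>\<^bsub>G\<^esub> x = \<zero>\<^bsub>G\<^esub>"
proof -
  interpret abelian_group G by fact
  show "x \<in> carrier G \<Longrightarrow> \<ominus>\<^bsub>G\<^esub> x \<oplus>\<^bsub>G\<^esub> x = \<zero>\<^bsub>G\<^esub>" by (simp add: l_neg)
qed

lemma g_r_neg: assumes "abelian_group G" shows "x \<in> carrier G \<Longrightarrow> x \<oplus>\<^bsub>G\<^esub> \<ominus>\<^bsub>G\<^esub> x = \<zero>\<^bsub>G\<^esub>"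
proof -
  interpret abelian_group G by fact
  show "x \<in> carrier G \<Longrightarrow> x \<oplus>\<^bsub>G\<^esub> \<ominus>\<^bsub>G\<^esub> x = \<zero>\<^bsub>G\<^esub>" by (simp add: r_neg)
qed

lemma g_r_zero: assumes "abelian_group G" shows "x \<in> carrier G \<Longrightarrow> x \<oplus>\<^bsub>G\<^esub> \<zero>\<^bsub>G\<^esub> = x"
proof -
  interpret abelian_group G by fact
  show "x \<in> carrier G \<Longrightarrow> x \<oplus>\<^bsub>G\<^esub> \<zero>\<^bsub>G\<^esub> = x" by simp
qed

lemma dsum_carrier: "f \<in> carrier (dsum R I A) \<longleftrightarrow> f \<in> (\<Pi>\<^sub>E i\<in>I. carrier (A i)) \<and> finite {i\<in>I. f i \<noteq> \<zero>\<^bsub>A i\<^esub>}"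
  by (simp add: dsum_def)
lemma dsum_add: "x \<oplus>\<^bsub>dsum R I A\<^esub> y = (\<lambda>i\<in>I. x i \<oplus>\<^bsub>A i\<^esub> y i)"
  by (simp add: dsum_def)
lemma dsum_zero: "\<zero>\<^bsub>dsum R I A\<^esub> = (\<lambda>i\<in>I. \<zero>\<^bsub>A i\<^esub>)"
  by (simp add: dsum_def)
lemma dsum_smult: "smult (dsum R I A) r x = (\<lambda>i\<in>I. smult (A i) r (x i))"
  by (simp add: dsum_def)

lemma rmod_dsum: fixes R :: "'r ring" assumes R: "ring R" and A: "\<And>i. i \<in> I \<Longrightarrow> rmodule R (A i)"
  shows "rmodule R (dsum R I A)"
proof -
  have Ai: "rmod R (A i)" if "i \<in> I" for i using A[OF that] by (simp add: rmod_def)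
  have ag: "abelian_group (A i)" if "i \<in> I" for i using A[OF that] by (simp add: rmodule_def)
  
  let ?D = "dsum R I A"
  have addc: "x \<oplus>\<^bsub>?D\<^esub> y \<in> carrier ?D" if x: "x \<in> carrier ?D" and y: "y \<in> carrier ?D" for x y
  proof -
    have "{i\<in>I. (x \<oplus>\<^bsub>?D\<^esub> y) i \<noteq> \<zero>\<^bsub>A i\<^esub>} \<subseteq> {i\<in>I. x i \<noteq> \<zero>\<^bsub>A i\<^esub>} \<union> {i\<in>I. y i \<noteq> \<zero>\<^bsub>A i\<^esub>}"
      using x y ag by (auto simp: dsum_carrier dsum_add g_l_zero g_zero_closed)
    moreover have "x \<oplus>\<^bsub>?D\<^esub> y \<in> (\<Pi>\<^sub>E i\<in>I. carrier (A i))"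
      using x y ag by (auto simp: dsum_carrier dsum_add intro: g_a_closed)
    ultimately show ?thesis using x y by (auto simp: dsum_carrier intro: finite_subset)
  qed
  have zc: "\<zero>\<^bsub>?D\<^esub> \<in> carrier ?D"
    using ag by (auto simp: dsum_carrier dsum_zero intro: g_zero_closed)
  have smc: "smult ?D r x \<in> carrier ?D" if r: "r \<in> carrier R" and x: "x \<in> carrier ?D" for r x
  proof -
    have "{i\<in>I. (smult ?D r x) i \<noteq> \<zero>\<^bsub>A i\<^esub>} \<subseteq> {i\<in>I. x i \<noteq> \<zero>\<^bsub>A i\<^esub>}"
      using x r Ai by (auto simp: dsum_carrier dsum_smult rmod.sm_zero[of R])
    moreover have "smult ?D r x \<in> (\<Pi>\<^sub>E i\<in>I. carrier (A i))"
      using x r Ai by (auto simp: dsum_carrier dsum_smult intro: rmod.sm_closed[of R])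
    ultimately show ?thesis using x by (auto simp: dsum_carrier intro: finite_subset)
  qed
  have agD: "abelian_group ?D"
  proof (rule abelian_groupI)
    fix x y assume "x \<in> carrier ?D" "y \<in> carrier ?D" then show "x \<oplus>\<^bsub>?D\<^esub> y \<in> carrier ?D" by (rule addc)
  next
    show "\<zero>\<^bsub>?D\<^esub> \<in> carrier ?D" by (rule zc)
  next
    fix x y z assume "x \<in> carrier ?D" "y \<in> carrier ?D" "z \<in> carrier ?D"
    then show "x \<oplus>\<^bsub>?D\<^esub> y \<oplus>\<^bsub>?D\<^esub> z = x \<oplus>\<^bsub>?D\<^esub> (y \<oplus>\<^bsub>?D\<^esub> z)"
      using ag by (auto simp: dsum_carrier dsum_add g_a_assoc PiE_iff)
  next
    fix x y assume "x \<in> carrier ?D" "y \<in> carrier ?D"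
    then show "x \<oplus>\<^bsub>?D\<^esub> y = y \<oplus>\<^bsub>?D\<^esub> x"
      using ag by (auto simp: dsum_carrier dsum_add PiE_iff intro!: restrict_ext g_a_comm)
  next
    fix x assume "x \<in> carrier ?D"
    then show "\<zero>\<^bsub>?D\<^esub> \<oplus>\<^bsub>?D\<^esub> x = x"
      using ag by (auto simp: dsum_carrier dsum_add dsum_zero PiE_iff g_l_zero extensional_def)
  next
    fix x assume x: "x \<in> carrier ?D"
    let ?y = "\<lambda>i\<in>I. \<ominus>\<^bsub>A i\<^esub> x i"
    have "{i\<in>I. ?y i \<noteq> \<zero>\<^bsub>A i\<^esub>} \<subseteq> {i\<in>I. x i \<noteq> \<zero>\<^bsub>A i\<^esub>}"
      using x ag by (auto simp: dsum_carrier g_inv_closed g_inv_zero)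
    then have "finite {i\<in>I. ?y i \<noteq> \<zero>\<^bsub>A i\<^esub>}" by (rule finite_subset) (use x in \<open>simp add: dsum_carrier\<close>)
    moreover have "?y \<in> (\<Pi>\<^sub>E i\<in>I. carrier (A i))" using x ag by (auto simp: dsum_carrier intro: g_inv_closed)
    ultimately have "?y \<in> carrier ?D" by (simp only: dsum_carrier)
    moreover have "?y \<oplus>\<^bsub>?D\<^esub> x = \<zero>\<^bsub>?D\<^esub>"
      using x ag by (auto simp: dsum_carrier dsum_add dsum_zero g_l_neg PiE_iff intro!: restrict_ext)
    ultimately show "\<exists>y\<in>carrier ?D. y \<oplus>\<^bsub>?D\<^esub> x = \<zero>\<^bsub>?D\<^esub>" by blast
  qed
  show ?thesis unfolding rmodule_def
  proof (intro conjI ballI)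
    show "ring R" by (rule R)
    show "abelian_group ?D" by (rule agD)
  next
    fix r x assume "r \<in> carrier R" "x \<in> carrier ?D" then show "smult ?D r x \<in> carrier ?D" by (rule smc)
  next
    fix r x y assume "r \<in> carrier R" "x \<in> carrier ?D" "y \<in> carrier ?D"
    then show "smult ?D r (x \<oplus>\<^bsub>?D\<^esub> y) = smult ?D r x \<oplus>\<^bsub>?D\<^esub> smult ?D r y"
      using Ai by (auto simp: dsum_carrier dsum_add dsum_smult PiE_iff rmod.sm_add[of R])
  next
    fix r s x assume "r \<in> carrier R" "s \<in> carrier R" "x \<in> carrier ?D"
    then show "smult ?D (r \<oplus>\<^bsub>R\<^esub> s) x = smult ?D r x \<oplus>\<^bsub>?D\<^esub> smult ?D s x"
      using Ai by (auto simp: dsum_carrier dsum_add dsum_smult PiE_iff rmod.sm_radd[of R])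
  next
    fix r s x assume "r \<in> carrier R" "s \<in> carrier R" "x \<in> carrier ?D"
    then show "smult ?D (r \<otimes>\<^bsub>R\<^esub> s) x = smult ?D s (smult ?D r x)"
      using Ai by (auto simp: dsum_carrier dsum_smult PiE_iff rmod.sm_mult[of R])
  next
    fix x assume "x \<in> carrier ?D"
    then show "smult ?D \<one>\<^bsub>R\<^esub> x = x"
      using Ai by (auto simp: dsum_carrier dsum_smult PiE_iff rmod.sm_one[of R] extensional_def)
  qed
qed


context rmod begin

lemma rmod_sub: assumes B: "rsubmodule R X B" shows "rmodule R (X\<lparr>carrier := B\<rparr>)"
proof -
  have BX: "B \<subseteq> carrier X" and B0: "\<zero> \<in> B" and Badd: "\<And>x y. x \<in> B \<Longrightarrow> y \<in> B \<Longrightarrow> x \<oplus> y \<in> B"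
    and Bneg: "\<And>x. x \<in> B \<Longrightarrow> \<ominus> x \<in> B" and Bsm: "\<And>r x. r \<in> carrier R \<Longrightarrow> x \<in> B \<Longrightarrow> smult X r x \<in> B"
    using B by (auto simp: rsubmodule_def)
  have ag: "abelian_group (X\<lparr>carrier := B\<rparr>)"
  proof (rule abelian_groupI, goal_cases)
    case (1 x y) then show ?case using Badd by simp
  next
    case 2 then show ?case using B0 by simp
  next
    case (3 x y z) then show ?case using BX by (simp add: a_assoc subset_iff)
  next
    case (4 x y) then show ?case using BX by (simp add: a_comm subset_iff)
  next
    case (5 x) then show ?case using BX by (simp add: subset_iff)
  next
    case (6 x) then show ?case using BX Bneg by (intro bexI[of _ "\<ominus> x"]) (auto simp: l_neg subset_iff)
  qed
  show ?thesis unfolding rmodule_def using ag ringR BX Bsm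
    by (auto simp: sm_add sm_radd sm_mult subset_iff)
qed

lemma finsum_sub: assumes B: "rsubmodule R X B" and A: "finite A" and f: "f \<in> A \<rightarrow> B"
  shows "finsum (X\<lparr>carrier := B\<rparr>) f A = finsum X f A"
proof -
  interpret Sb: abelian_group "X\<lparr>carrier := B\<rparr>" using rmod_sub[OF B] by (simp add: rmodule_def)
  have BX: "B \<subseteq> carrier X" using B by (simp add: rsubmodule_def)
  show ?thesis using A f
  proof (induction A rule: finite_induct)
    case empty then show ?case by simp
  next
    case (insert a A)
    then have fa: "f a \<in> B" and fA: "f \<in> A \<rightarrow> B" by auto
    have "finsum (X\<lparr>carrier := B\<rparr>) f (insert a A) = f a \<oplus>\<^bsub>X\<lparr>carrier := B\<rparr>\<^esub> finsum (X\<lparr>carrier := B\<rparr>) f A"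
      by (rule Sb.finsum_insert) (use insert fa fA in auto)
    moreover have "finsum X f (insert a A) = f a \<oplus> finsum X f A"
      by (rule finsum_insert) (use insert fa fA BX in auto)
    ultimately show ?case using insert fA by simp
  qed
qed

lemma rspan_sub: assumes B: "rsubmodule R X B" and G: "finite G" "G \<subseteq> B"
  shows "rspan R (X\<lparr>carrier := B\<rparr>) G = rspan R X G"
proof -
  have "finsum (X\<lparr>carrier := B\<rparr>) (\<lambda>g. smult X (c g) g) G = finsum X (\<lambda>g. smult X (c g) g) G"
    if c: "c \<in> G \<rightarrow> carrier R" for c
    using B G c by (intro finsum_sub) (auto simp: rsubmodule_def Pi_iff subset_iff)
  note eq = this
  show ?thesis
  proof (intro equalityI subsetI)
    fix x assume "x \<in> rspan R (X\<lparr>carrier := B\<rparr>) G"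
    then obtain c where c: "c \<in> G \<rightarrow> carrier R" "x = finsum (X\<lparr>carrier := B\<rparr>) (\<lambda>g. smult X (c g) g) G"
      unfolding rspan_def by auto
    then have "x = finsum X (\<lambda>g. smult X (c g) g) G" using eq by simp
    then show "x \<in> rspan R X G" using c(1) by (rule rspan_memI[rotated])
  next
    fix x assume "x \<in> rspan R X G"
    then obtain c where c: "c \<in> G \<rightarrow> carrier R" "x = finsum X (\<lambda>g. smult X (c g) g) G"
      by (rule rspanE)
    then have "x = finsum (X\<lparr>carrier := B\<rparr>) (\<lambda>g. smult (X\<lparr>carrier := B\<rparr>) (c g) g) G" using eq by simp
    then show "x \<in> rspan R (X\<lparr>carrier := B\<rparr>) G" using c(1) unfolding rspan_def by blast
  qed
qed

lemma rfg_sub: assumes B: "rsubmodule R X B"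
  shows "rfg R (X\<lparr>carrier := B\<rparr>) \<longleftrightarrow> (\<exists>G. finite G \<and> G \<subseteq> B \<and> rspan R X G = B)"
  using rspan_sub[OF B] unfolding rfg_def by auto

lemma submod_sub: assumes B: "rsubmodule R X B" and A: "rsubmodule R (X\<lparr>carrier := B\<rparr>) A"
  shows "rsubmodule R X A"
proof -
  interpret Sb: abelian_group "X\<lparr>carrier := B\<rparr>" using rmod_sub[OF B] by (simp add: rmodule_def)
  have AB: "A \<subseteq> B" using A by (simp add: rsubmodule_def)
  have BX: "B \<subseteq> carrier X" using B by (simp add: rsubmodule_def)
  have neg: "\<ominus>\<^bsub>X\<lparr>carrier := B\<rparr>\<^esub> x = \<ominus> x" if "x \<in> B" for x
  proof -
    have "\<ominus>\<^bsub>X\<lparr>carrier := B\<rparr>\<^esub> x \<in> B" using that Sb.a_inv_closed[of x] by simp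
    moreover have "\<ominus>\<^bsub>X\<lparr>carrier := B\<rparr>\<^esub> x \<oplus> x = \<zero>" using that Sb.l_neg[of x] by simp
    ultimately show ?thesis using that BX by (metis minus_equality subsetD)
  qed
  show ?thesis using A AB BX neg unfolding rsubmodule_def by (auto simp: subset_iff)
qed

end

lemma hom_zero: assumes N: "rmodule R N" and Y: "rmodule R Y" and f: "f \<in> rhom R N Y"
  shows "f \<zero>\<^bsub>N\<^esub> = \<zero>\<^bsub>Y\<^esub>"
proof -
  interpret N: abelian_group N using N by (simp add: rmodule_def)
  interpret Y: abelian_group Y using Y by (simp add: rmodule_def)
  have f0: "f \<zero>\<^bsub>N\<^esub> \<in> carrier Y" using f by (auto simp: rhom_def)
  have "f \<zero>\<^bsub>N\<^esub> = f \<zero>\<^bsub>N\<^esub> \<oplus>\<^bsub>Y\<^esub> f \<zero>\<^bsub>N\<^esub>"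
    using f by (auto simp: rhom_def dest!: bspec[of _ _ "\<zero>\<^bsub>N\<^esub>"])
  then have "f \<zero>\<^bsub>N\<^esub> \<oplus>\<^bsub>Y\<^esub> f \<zero>\<^bsub>N\<^esub> = f \<zero>\<^bsub>N\<^esub>" by simp
  then show ?thesis using f0 Y.add.l_cancel_one by simp
qed

lemma hom_finsum: assumes N: "rmodule R N" and Y: "rmodule R Y" and f: "f \<in> rhom R N Y"
  and A: "finite A" and u: "u \<in> A \<rightarrow> carrier N"
  shows "f (finsum N u A) = finsum Y (\<lambda>a. f (u a)) A"
proof -
  interpret N: abelian_group N using N by (simp add: rmodule_def)
  interpret Y: abelian_group Y using Y by (simp add: rmodule_def)
  have fc: "f x \<in> carrier Y" if "x \<in> carrier N" for x using f that by (auto simp: rhom_def)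
  have fa: "f (x \<oplus>\<^bsub>N\<^esub> y) = f x \<oplus>\<^bsub>Y\<^esub> f y" if "x \<in> carrier N" "y \<in> carrier N" for x y
    using f that by (auto simp: rhom_def)
  show ?thesis using A u
  proof (induction A rule: finite_induct)
    case empty then show ?case using hom_zero[OF N Y f] by simp
  next
    case (insert a A)
    then have ua: "u a \<in> carrier N" and uA: "u \<in> A \<rightarrow> carrier N" by auto
    have "finsum N u (insert a A) = u a \<oplus>\<^bsub>N\<^esub> finsum N u A"
      by (rule N.finsum_insert) (use insert ua uA in auto)
    moreover have "finsum Y (\<lambda>a. f (u a)) (insert a A) = f (u a) \<oplus>\<^bsub>Y\<^esub> finsum Y (\<lambda>a. f (u a)) A"
      by (rule Y.finsum_insert) (use insert ua uA fc in auto)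
    ultimately show ?case using insert ua uA fa by simp
  qed
qed

locale main =
  fixes R :: "'r ring" and S :: "('r,'a) module \<Rightarrow> bool"
    and Ms :: "nat \<Rightarrow> ('r,'a) module" and n :: nat and X :: "('r,'a) module" (structure)
    and M H MH p
  assumes artinian: "artinian_ring R"
    and S_mod: "\<forall>D. S D \<longrightarrow> rmodule R D"
    and S_sums: "\<forall>(I::'a set) A D. (\<forall>i\<in>I. S (A i)) \<and> rmodule R D \<and> riso R D (dsum R I A) \<longrightarrow> S D"
    and S_sub: "\<forall>D A. S D \<and> rsubmodule R D A \<longrightarrow> S (D\<lparr>carrier := A\<rparr>)"
    and S_R: "\<exists>D. S D \<and> riso R D (RR R)"
    and Ms_in: "\<forall>i<n. S (Ms i) \<and> rfg R (Ms i) \<and> indecomposable R (Ms i)"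
    and Ms_distinct: "\<forall>i<n. \<forall>j<n. i \<noteq> j \<longrightarrow> \<not> riso R (Ms i) (Ms j)"
    and Ms_all: "\<forall>D. S D \<and> rfg R D \<and> indecomposable R D \<longrightarrow> (\<exists>i<n. riso R D (Ms i))"
    and X_in: "S X"
    and M_def: "M = dsum R {..<n} Ms"
    and H_def: "H = rhom R M X"
    and MH_def: "MH = dsum R H (\<lambda>_. M)"
    and p_def: "p = (\<lambda>\<phi>\<in>carrier MH. finsum X (\<lambda>h. h (\<phi> h)) {h\<in>H. \<phi> h \<noteq> \<zero>\<^bsub>M\<^esub>})"
begin

lemma rmX: "rmodule R X" using S_mod X_in by blast
lemma ringR': "ring R" using artinian by (simp add: artinian_ring_def)
lemma rmMs: "i < n \<Longrightarrow> rmodule R (Ms i)" using S_mod Ms_in by blast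
lemma rmM: "rmodule R M" unfolding M_def by (rule rmod_dsum[OF ringR']) (use rmMs in auto)
lemma rmMH: "rmodule R MH" unfolding MH_def by (rule rmod_dsum[OF ringR' rmM])

sublocale rmod R X by (simp add: rmod_def rmX)

lemma rmodM: "rmod R M" by (simp add: rmod_def rmM)
lemma rmodMH: "rmod R MH" by (simp add: rmod_def rmMH)
lemma agM: "abelian_group M" using rmM by (simp add: rmodule_def)
lemma agMH: "abelian_group MH" using rmMH by (simp add: rmodule_def)

lemma H_fun: "h \<in> H \<Longrightarrow> m \<in> carrier M \<Longrightarrow> h m \<in> carrier X"
  unfolding H_def rhom_def by auto
lemma H_add: "h \<in> H \<Longrightarrow> m \<in> carrier M \<Longrightarrow> m' \<in> carrier M \<Longrightarrow> h (m \<oplus>\<^bsub>M\<^esub> m') = h m \<oplus> h m'"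
  unfolding H_def rhom_def by auto
lemma H_sm: "h \<in> H \<Longrightarrow> r \<in> carrier R \<Longrightarrow> m \<in> carrier M \<Longrightarrow> h (smult M r m) = smult X r (h m)"
  unfolding H_def rhom_def by auto
lemma H_zero: "h \<in> H \<Longrightarrow> h \<zero>\<^bsub>M\<^esub> = \<zero>"
  unfolding H_def by (rule hom_zero[OF rmM rmX])

lemma MH_carrier: "\<phi> \<in> carrier MH \<longleftrightarrow> \<phi> \<in> (\<Pi>\<^sub>E h\<in>H. carrier M) \<and> finite {h\<in>H. \<phi> h \<noteq> \<zero>\<^bsub>M\<^esub>}"
  unfolding MH_def by (rule dsum_carrier)

lemma p_eq: assumes phi: "\<phi> \<in> carrier MH" and F: "finite F" "F \<subseteq> H" "{h\<in>H. \<phi> h \<noteq> \<zero>\<^bsub>M\<^esub>} \<subseteq> F"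
  shows "p \<phi> = finsum X (\<lambda>h. h (\<phi> h)) F"
proof -
  have "p \<phi> = finsum X (\<lambda>h. h (\<phi> h)) {h\<in>H. \<phi> h \<noteq> \<zero>\<^bsub>M\<^esub>}" using phi by (simp add: p_def)
  also have "\<dots> = finsum X (\<lambda>h. h (\<phi> h)) F"
  proof (rule add.finprod_mono_neutral_cong_left)
    show "finite F" by fact
    show "{h\<in>H. \<phi> h \<noteq> \<zero>\<^bsub>M\<^esub>} \<subseteq> F" by fact
    show "\<And>i. i \<in> F - {h\<in>H. \<phi> h \<noteq> \<zero>\<^bsub>M\<^esub>} \<Longrightarrow> i (\<phi> i) = \<zero>" using F H_zero by auto
    show "\<And>x. x \<in> {h\<in>H. \<phi> h \<noteq> \<zero>\<^bsub>M\<^esub>} \<Longrightarrow> x (\<phi> x) = x (\<phi> x)" by simp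
    show "(\<lambda>h. h (\<phi> h)) \<in> F \<rightarrow> carrier X" using F phi H_fun by (auto simp: MH_carrier PiE_iff)
  qed
  finally show ?thesis .
qed

lemma p_hom: "p \<in> rhom R MH X"
  unfolding rhom_def
proof (intro CollectI conjI ballI)
  show "p \<in> carrier MH \<rightarrow>\<^sub>E carrier X"
    unfolding p_def using H_fun by (auto simp: MH_carrier PiE_iff intro!: finsum_closed)
next
  fix \<phi> \<psi> assume phi: "\<phi> \<in> carrier MH" and psi: "\<psi> \<in> carrier MH"
  let ?F = "{h\<in>H. \<phi> h \<noteq> \<zero>\<^bsub>M\<^esub>} \<union> {h\<in>H. \<psi> h \<noteq> \<zero>\<^bsub>M\<^esub>}"
  have fF: "finite ?F" using phi psi by (simp add: MH_carrier)
  have sum: "\<phi> \<oplus>\<^bsub>MH\<^esub> \<psi> \<in> carrier MH" using g_a_closed[OF agMH phi psi] .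
  have addeq: "(\<phi> \<oplus>\<^bsub>MH\<^esub> \<psi>) h = \<phi> h \<oplus>\<^bsub>M\<^esub> \<psi> h" if "h \<in> H" for h
    using that by (simp add: MH_def dsum_add)
  have pc: "\<phi> h \<in> carrier M" "\<psi> h \<in> carrier M" if "h \<in> H" for h
    using phi psi that by (auto simp: MH_carrier PiE_iff)
  have "{h\<in>H. (\<phi> \<oplus>\<^bsub>MH\<^esub> \<psi>) h \<noteq> \<zero>\<^bsub>M\<^esub>} \<subseteq> ?F"
    using addeq g_l_zero[OF agM] g_zero_closed[OF agM] by auto
  then have "p (\<phi> \<oplus>\<^bsub>MH\<^esub> \<psi>) = finsum X (\<lambda>h. h ((\<phi> \<oplus>\<^bsub>MH\<^esub> \<psi>) h)) ?F"
    using sum fF by (intro p_eq) auto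
  also have "\<dots> = finsum X (\<lambda>h. h (\<phi> h) \<oplus> h (\<psi> h)) ?F"
    by (intro finsum_cong') (use addeq pc H_add H_fun in auto)
  also have "\<dots> = finsum X (\<lambda>h. h (\<phi> h)) ?F \<oplus> finsum X (\<lambda>h. h (\<psi> h)) ?F"
    by (rule finsum_addf) (use pc H_fun in auto)
  also have "\<dots> = p \<phi> \<oplus> p \<psi>"
    using p_eq[OF phi fF] p_eq[OF psi fF] by auto
  finally show "p (\<phi> \<oplus>\<^bsub>MH\<^esub> \<psi>) = p \<phi> \<oplus> p \<psi>" .
next
  fix r \<phi> assume r: "r \<in> carrier R" and phi: "\<phi> \<in> carrier MH"
  let ?F = "{h\<in>H. \<phi> h \<noteq> \<zero>\<^bsub>M\<^esub>}"
  have fF: "finite ?F" using phi by (simp add: MH_carrier)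
  have sm: "smult MH r \<phi> \<in> carrier MH" using rmodMH r phi by (rule rmod.sm_closed)
  have smeq: "(smult MH r \<phi>) h = smult M r (\<phi> h)" if "h \<in> H" for h
    using that by (simp add: MH_def dsum_smult)
  have pc: "\<phi> h \<in> carrier M" if "h \<in> H" for h
    using phi that by (auto simp: MH_carrier PiE_iff)
  have "{h\<in>H. (smult MH r \<phi>) h \<noteq> \<zero>\<^bsub>M\<^esub>} \<subseteq> ?F"
    using smeq rmod.sm_zero[OF rmodM r] by auto
  then have "p (smult MH r \<phi>) = finsum X (\<lambda>h. h ((smult MH r \<phi>) h)) ?F"
    using sm fF by (intro p_eq) auto
  also have "\<dots> = finsum X (\<lambda>h. smult X r (h (\<phi> h))) ?F"
    by (intro finsum_cong') (use smeq pc H_sm H_fun r rmod.sm_closed[OF rmodM] in auto)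
  also have "\<dots> = smult X r (finsum X (\<lambda>h. h (\<phi> h)) ?F)"
    by (rule sm_finsum[symmetric]) (use pc H_fun fF r in auto)
  also have "\<dots> = smult X r (p \<phi>)" using phi by (simp add: p_def)
  finally show "p (smult MH r \<phi>) = smult X r (p \<phi>)" .
qed

end

context main begin

definition lifts :: "'a set \<Rightarrow> bool" where
  "lifts B \<longleftrightarrow> (\<exists>g. (\<forall>b\<in>B. g b \<in> carrier MH) \<and> (\<forall>b\<in>B. \<forall>b'\<in>B. g (b \<oplus> b') = g b \<oplus>\<^bsub>MH\<^esub> g b') \<and>
     (\<forall>r\<in>carrier R. \<forall>b\<in>B. g (smult X r b) = smult MH r (g b)) \<and> (\<forall>b\<in>B. p (g b) = b))"

lemma p_add: "\<phi> \<in> carrier MH \<Longrightarrow> \<psi> \<in> carrier MH \<Longrightarrow> p (\<phi> \<oplus>\<^bsub>MH\<^esub> \<psi>) = p \<phi> \<oplus> p \<psi>"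
  using p_hom by (auto simp: rhom_def)

lemma lifts_zero: "lifts {\<zero>}"
  unfolding lifts_def
proof (intro exI[of _ "\<lambda>_. \<zero>\<^bsub>MH\<^esub>"] conjI ballI)
  fix b assume "b \<in> {\<zero>}"
  show "\<zero>\<^bsub>MH\<^esub> \<in> carrier MH" by (rule g_zero_closed[OF agMH])
  show "p \<zero>\<^bsub>MH\<^esub> = b"
  proof -
    have "p \<zero>\<^bsub>MH\<^esub> = finsum X (\<lambda>h. h (\<zero>\<^bsub>MH\<^esub> h)) {}"
      proof (rule p_eq)
      show "\<zero>\<^bsub>MH\<^esub> \<in> carrier MH" by (rule g_zero_closed[OF agMH])
      show "{h \<in> H. \<zero>\<^bsub>MH\<^esub> h \<noteq> \<zero>\<^bsub>M\<^esub>} \<subseteq> {}" by (simp add: MH_def dsum_zero)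
    qed auto
    then show ?thesis using \<open>b \<in> {\<zero>}\<close> by simp
  qed
next
  fix b b' assume "b \<in> {\<zero>}" "b' \<in> {\<zero>}"
  show "\<zero>\<^bsub>MH\<^esub> = \<zero>\<^bsub>MH\<^esub> \<oplus>\<^bsub>MH\<^esub> \<zero>\<^bsub>MH\<^esub>"
    using g_l_zero[OF agMH g_zero_closed[OF agMH]] by simp
next
  fix r b assume "r \<in> carrier R" "b \<in> {\<zero>}"
  then show "\<zero>\<^bsub>MH\<^esub> = smult MH r \<zero>\<^bsub>MH\<^esub>" using rmod.sm_zero[OF rmodMH] by simp
qed

lemma lifts_sum:
  assumes A: "rsubmodule R X A" and C: "rsubmodule R X C" and AC: "A \<inter> C = {\<zero>}"
    and B: "rsubmodule R X B" and ABC: "\<forall>x\<in>B. \<exists>a\<in>A. \<exists>c\<in>C. x = a \<oplus> c"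
    and LA: "lifts A" and LC: "lifts C"
  shows "lifts B"
proof -
  have AX: "A \<subseteq> carrier X" and CX: "C \<subseteq> carrier X" using A C by (auto simp: rsubmodule_def)
  have uniq: "a = a' \<and> c = c'" if "a \<in> A" "a' \<in> A" "c \<in> C" "c' \<in> C" "a \<oplus> c = a' \<oplus> c'" for a a' c c'
  proof -
    have X: "a \<in> carrier X" "a' \<in> carrier X" "c \<in> carrier X" "c' \<in> carrier X" using that AX CX by auto
    have "a \<oplus> \<ominus> a' = c' \<oplus> \<ominus> c"
    proof -
      have "a \<oplus> \<ominus> a' = (a \<oplus> c) \<oplus> (\<ominus> a' \<oplus> \<ominus> c)" using X by (simp add: a_ac r_neg)
      also have "\<dots> = (a' \<oplus> c') \<oplus> (\<ominus> a' \<oplus> \<ominus> c)" using that by simp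
      also have "\<dots> = (a' \<oplus> \<ominus> a') \<oplus> (c' \<oplus> \<ominus> c)" using X by (simp add: a_ac)
      also have "\<dots> = c' \<oplus> \<ominus> c" using X by (simp add: r_neg)
      finally show ?thesis .
    qed
    moreover have "a \<oplus> \<ominus> a' \<in> A" using A that by (auto simp: rsubmodule_def)
    moreover have "c' \<oplus> \<ominus> c \<in> C" using C that by (auto simp: rsubmodule_def)
    ultimately have z1: "a \<oplus> \<ominus> a' = \<zero>" and z2: "c' \<oplus> \<ominus> c = \<zero>" using AC by auto
    from z1 X have "a = a'" by (metis add.inv_equality add.inv_inv a_inv_closed a_comm)
    moreover from z2 X have "c' = c" by (metis add.inv_equality add.inv_inv a_inv_closed a_comm)
    ultimately show ?thesis by simp
  qed
  define pr where "pr b = (SOME ac. fst ac \<in> A \<and> snd ac \<in> C \<and> b = fst ac \<oplus> snd ac)" for b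
  have pr_spec: "fst (pr b) \<in> A \<and> snd (pr b) \<in> C \<and> b = fst (pr b) \<oplus> snd (pr b)" if bB: "b \<in> B" for b
  proof -
    obtain a c where "a \<in> A" "c \<in> C" "b = a \<oplus> c" using ABC bB by blast
    then have "\<exists>ac. fst ac \<in> A \<and> snd ac \<in> C \<and> b = fst ac \<oplus> snd ac" by (intro exI[of _ "(a,c)"]) auto
    then show ?thesis unfolding pr_def by (rule someI_ex[of "\<lambda>ac. fst ac \<in> A \<and> snd ac \<in> C \<and> b = fst ac \<oplus> snd ac"])
  qed
  have pr_eq: "pr (a \<oplus> c) = (a, c)" if "a \<in> A" "c \<in> C" "a \<oplus> c \<in> B" for a c
  proof -
    from pr_spec[OF that(3)] have h: "fst (pr (a \<oplus> c)) \<in> A" "snd (pr (a \<oplus> c)) \<in> C"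
      "a \<oplus> c = fst (pr (a \<oplus> c)) \<oplus> snd (pr (a \<oplus> c))" by auto
    from uniq[OF h(1) that(1) h(2) that(2) h(3)[symmetric]] show ?thesis by (simp add: prod_eq_iff)
  qed
  obtain gA where gA: "\<forall>b\<in>A. gA b \<in> carrier MH" "\<forall>b\<in>A. \<forall>b'\<in>A. gA (b \<oplus> b') = gA b \<oplus>\<^bsub>MH\<^esub> gA b'"
     "\<forall>r\<in>carrier R. \<forall>b\<in>A. gA (smult X r b) = smult MH r (gA b)" "\<forall>b\<in>A. p (gA b) = b"
    using LA unfolding lifts_def by blast
  obtain gC where gC: "\<forall>b\<in>C. gC b \<in> carrier MH" "\<forall>b\<in>C. \<forall>b'\<in>C. gC (b \<oplus> b') = gC b \<oplus>\<^bsub>MH\<^esub> gC b'"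
     "\<forall>r\<in>carrier R. \<forall>b\<in>C. gC (smult X r b) = smult MH r (gC b)" "\<forall>b\<in>C. p (gC b) = b"
    using LC unfolding lifts_def by blast
  define g where "g b = gA (fst (pr b)) \<oplus>\<^bsub>MH\<^esub> gC (snd (pr b))" for b
  have gac: "g (a \<oplus> c) = gA a \<oplus>\<^bsub>MH\<^esub> gC c" if "a \<in> A" "c \<in> C" "a \<oplus> c \<in> B" for a c
    using pr_eq[OF that] by (simp add: g_def)
  have decB: "\<exists>a\<in>A. \<exists>c\<in>C. b = a \<oplus> c" if "b \<in> B" for b using ABC that by blast
  show ?thesis unfolding lifts_def
  proof (intro exI[of _ g] conjI ballI)
    fix b assume b: "b \<in> B"
    then obtain a c where ac: "a \<in> A" "c \<in> C" "b = a \<oplus> c" using decB by blast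
    show "g b \<in> carrier MH" using ac b gac gA gC g_a_closed[OF agMH] by auto
    show "p (g b) = b" using ac b gac gA gC p_add by auto
  next
    fix b b' assume b: "b \<in> B" and b': "b' \<in> B"
    obtain a c where ac: "a \<in> A" "c \<in> C" "b = a \<oplus> c" using decB b by blast
    obtain a' c' where ac': "a' \<in> A" "c' \<in> C" "b' = a' \<oplus> c'" using decB b' by blast
    have X: "a \<in> carrier X" "a' \<in> carrier X" "c \<in> carrier X" "c' \<in> carrier X" using ac ac' AX CX by auto
    have s: "b \<oplus> b' = (a \<oplus> a') \<oplus> (c \<oplus> c')" using X ac ac' by (simp add: a_ac)
    have aa: "a \<oplus> a' \<in> A" and cc: "c \<oplus> c' \<in> C" using A C ac ac' by (auto simp: rsubmodule_def)
    have bb: "b \<oplus> b' \<in> B" using B b b' by (auto simp: rsubmodule_def)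
    have "g (b \<oplus> b') = gA (a \<oplus> a') \<oplus>\<^bsub>MH\<^esub> gC (c \<oplus> c')" using gac[OF aa cc] s bb by simp
    also have "\<dots> = (gA a \<oplus>\<^bsub>MH\<^esub> gA a') \<oplus>\<^bsub>MH\<^esub> (gC c \<oplus>\<^bsub>MH\<^esub> gC c')" using gA gC ac ac' by simp
    also have "\<dots> = (gA a \<oplus>\<^bsub>MH\<^esub> gC c) \<oplus>\<^bsub>MH\<^esub> (gA a' \<oplus>\<^bsub>MH\<^esub> gC c')"
    proof -
      interpret MHg: abelian_group MH by (rule agMH)
      show ?thesis using gA gC ac ac' by (simp add: MHg.a_ac)
    qed
    also have "\<dots> = g b \<oplus>\<^bsub>MH\<^esub> g b'" using gac ac ac' b b' by simp
    finally show "g (b \<oplus> b') = g b \<oplus>\<^bsub>MH\<^esub> g b'" .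
  next
    fix r b assume r: "r \<in> carrier R" and b: "b \<in> B"
    obtain a c where ac: "a \<in> A" "c \<in> C" "b = a \<oplus> c" using decB b by blast
    have X: "a \<in> carrier X" "c \<in> carrier X" using ac AX CX by auto
    have s: "smult X r b = smult X r a \<oplus> smult X r c" using X ac r by (simp add: sm_add)
    have aa: "smult X r a \<in> A" and cc: "smult X r c \<in> C" using A C ac r by (auto simp: rsubmodule_def)
    have bb: "smult X r b \<in> B" using B b r by (auto simp: rsubmodule_def)
    have "g (smult X r b) = gA (smult X r a) \<oplus>\<^bsub>MH\<^esub> gC (smult X r c)" using gac[OF aa cc] s bb by simp
    also have "\<dots> = smult MH r (gA a) \<oplus>\<^bsub>MH\<^esub> smult MH r (gC c)" using gA gC ac r by simp
    also have "\<dots> = smult MH r (gA a \<oplus>\<^bsub>MH\<^esub> gC c)" using gA gC ac r rmod.sm_add[OF rmodMH] by simp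
    also have "\<dots> = smult MH r (g b)" using gac ac b by simp
    finally show "g (smult X r b) = smult MH r (g b)" .
  qed
qed

end

context main begin

lemma lifts_indec: assumes B: "rsubmodule R X B" and fg: "rfg R (X\<lparr>carrier := B\<rparr>)"
    and ind: "indecomposable R (X\<lparr>carrier := B\<rparr>)"
  shows "lifts B"
proof -
  have SB: "S (X\<lparr>carrier := B\<rparr>)" using S_sub X_in B by blast
  obtain i where i: "i < n" and iso: "riso R (X\<lparr>carrier := B\<rparr>) (Ms i)" using Ms_all SB fg ind by blast
  obtain \<phi> where phi: "\<phi> \<in> rhom R (X\<lparr>carrier := B\<rparr>) (Ms i)" and bij: "bij_betw \<phi> B (carrier (Ms i))"
    using iso unfolding riso_def by auto
  have BX: "B \<subseteq> carrier X" and Badd: "\<And>x y. x \<in> B \<Longrightarrow> y \<in> B \<Longrightarrow> x \<oplus> y \<in> B"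
    and Bsm: "\<And>r x. r \<in> carrier R \<Longrightarrow> x \<in> B \<Longrightarrow> smult X r x \<in> B"
    using B by (auto simp: rsubmodule_def)
  have rmi: "rmodule R (Ms i)" using rmMs i .
  have agi: "abelian_group (Ms i)" using rmi by (simp add: rmodule_def)
  have rmodi: "rmod R (Ms i)" using rmi by (simp add: rmod_def)
  have phadd: "\<phi> (x \<oplus> y) = \<phi> x \<oplus>\<^bsub>Ms i\<^esub> \<phi> y" if "x \<in> B" "y \<in> B" for x y
    using phi that by (auto simp: rhom_def)
  have phsm: "\<phi> (smult X r x) = smult (Ms i) r (\<phi> x)" if "r \<in> carrier R" "x \<in> B" for r x
    using phi that by (auto simp: rhom_def)
  have phc: "\<phi> x \<in> carrier (Ms i)" if "x \<in> B" for x using bij that by (rule bij_betw_apply)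
  define \<psi> where "\<psi> = inv_into B \<phi>"
  have inj: "inj_on \<phi> B" and surj: "\<phi> ` B = carrier (Ms i)" using bij by (auto simp: bij_betw_def)
  have psc: "\<psi> m \<in> B" if "m \<in> carrier (Ms i)" for m
    unfolding \<psi>_def using that surj by (metis inv_into_into)
  have psph: "\<psi> (\<phi> x) = x" if "x \<in> B" for x unfolding \<psi>_def using inj that by (rule inv_into_f_f)
  have phps: "\<phi> (\<psi> m) = m" if "m \<in> carrier (Ms i)" for m
    unfolding \<psi>_def using that surj by (metis f_inv_into_f)
  have psadd: "\<psi> (m \<oplus>\<^bsub>Ms i\<^esub> m') = \<psi> m \<oplus> \<psi> m'" if "m \<in> carrier (Ms i)" "m' \<in> carrier (Ms i)" for m m'
  proof -
    have "\<psi> (m \<oplus>\<^bsub>Ms i\<^esub> m') = \<psi> (\<phi> (\<psi> m) \<oplus>\<^bsub>Ms i\<^esub> \<phi> (\<psi> m'))" using that phps by simp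
    also have "\<dots> = \<psi> (\<phi> (\<psi> m \<oplus> \<psi> m'))" using phadd psc that by simp
    also have "\<dots> = \<psi> m \<oplus> \<psi> m'" using psph Badd psc that by simp
    finally show ?thesis .
  qed
  have pssm: "\<psi> (smult (Ms i) r m) = smult X r (\<psi> m)" if "r \<in> carrier R" "m \<in> carrier (Ms i)" for r m
  proof -
    have "\<psi> (smult (Ms i) r m) = \<psi> (smult (Ms i) r (\<phi> (\<psi> m)))" using that phps by simp
    also have "\<dots> = \<psi> (\<phi> (smult X r (\<psi> m)))" using phsm psc that by simp
    also have "\<dots> = smult X r (\<psi> m)" using psph Bsm psc that by simp
    finally show ?thesis .
  qed
  have Mcar: "m i \<in> carrier (Ms i)" if "m \<in> carrier M" for m
    using that i by (auto simp: M_def dsum_carrier PiE_iff)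
  define h0 where "h0 = (\<lambda>m\<in>carrier M. \<psi> (m i))"
  have h0H: "h0 \<in> H" unfolding H_def rhom_def
  proof (intro CollectI conjI ballI)
    show "h0 \<in> carrier M \<rightarrow>\<^sub>E carrier X" unfolding h0_def using Mcar psc BX by auto
  next
    fix m m' assume m: "m \<in> carrier M" and m': "m' \<in> carrier M"
    have mm: "m \<oplus>\<^bsub>M\<^esub> m' \<in> carrier M" using g_a_closed[OF agM m m'] .
    have "(m \<oplus>\<^bsub>M\<^esub> m') i = m i \<oplus>\<^bsub>Ms i\<^esub> m' i" using i by (simp add: M_def dsum_add)
    then show "h0 (m \<oplus>\<^bsub>M\<^esub> m') = h0 m \<oplus> h0 m'" unfolding h0_def using mm m m' psadd Mcar by simp
  next
    fix r m assume r: "r \<in> carrier R" and m: "m \<in> carrier M"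
    have mm: "smult M r m \<in> carrier M" using rmod.sm_closed[OF rmodM r m] .
    have "(smult M r m) i = smult (Ms i) r (m i)" using i by (simp add: M_def dsum_smult)
    then show "h0 (smult M r m) = smult X r (h0 m)" unfolding h0_def using mm m r pssm Mcar by simp
  qed
  define e where "e v = (\<lambda>j\<in>{..<n}. if j = i then v else \<zero>\<^bsub>Ms j\<^esub>)" for v
  have agj: "abelian_group (Ms j)" if "j < n" for j using rmMs[OF that] by (simp add: rmodule_def)
  have ec: "e v \<in> carrier M" if v: "v \<in> carrier (Ms i)" for v
  proof -
    have "{j\<in>{..<n}. e v j \<noteq> \<zero>\<^bsub>Ms j\<^esub>} \<subseteq> {i}" unfolding e_def by auto
    then have "finite {j\<in>{..<n}. e v j \<noteq> \<zero>\<^bsub>Ms j\<^esub>}" by (rule finite_subset) simp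
    moreover have "e v \<in> (\<Pi>\<^sub>E j\<in>{..<n}. carrier (Ms j))"
      unfolding e_def using v g_zero_closed[OF agj] by auto
    ultimately show ?thesis by (simp add: M_def dsum_carrier)
  qed
  have ei: "e v i = v" for v using i by (simp add: e_def)
  have eadd: "e (v \<oplus>\<^bsub>Ms i\<^esub> v') = e v \<oplus>\<^bsub>M\<^esub> e v'" if "v \<in> carrier (Ms i)" "v' \<in> carrier (Ms i)" for v v'
    unfolding M_def dsum_add e_def
    by (rule restrict_ext) (use g_l_zero[OF agj g_zero_closed[OF agj]] in auto)
  have esm: "e (smult (Ms i) r v) = smult M r (e v)" if r: "r \<in> carrier R" for r v
  proof -
    have z: "smult (Ms j) r \<zero>\<^bsub>Ms j\<^esub> = \<zero>\<^bsub>Ms j\<^esub>" if "j < n" for j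
      using rmod.sm_zero[of R "Ms j" r] rmMs[OF that] r by (simp add: rmod_def)
    show ?thesis unfolding M_def dsum_smult e_def
      by (rule restrict_ext) (use z in auto)
  qed
  define g where "g b = (\<lambda>h\<in>H. if h = h0 then e (\<phi> b) else \<zero>\<^bsub>M\<^esub>)" for b
  have gc: "g b \<in> carrier MH" if b: "b \<in> B" for b
  proof -
    have "{h\<in>H. g b h \<noteq> \<zero>\<^bsub>M\<^esub>} \<subseteq> {h0}" unfolding g_def by auto
    then have "finite {h\<in>H. g b h \<noteq> \<zero>\<^bsub>M\<^esub>}" by (rule finite_subset) simp
    moreover have "g b \<in> (\<Pi>\<^sub>E h\<in>H. carrier M)"
      unfolding g_def using ec phc b g_zero_closed[OF agM] by auto
    ultimately show ?thesis by (simp add: MH_carrier)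
  qed
  show ?thesis unfolding lifts_def
  proof (intro exI[of _ g] conjI ballI)
    fix b assume b: "b \<in> B"
    show "g b \<in> carrier MH" using gc b .
    have "p (g b) = finsum X (\<lambda>h. h (g b h)) {h0}"
      by (rule p_eq) (use gc b h0H in \<open>auto simp: g_def\<close>)
    also have "\<dots> = h0 (e (\<phi> b))" using h0H H_fun ec phc b by (simp add: g_def)
    also have "\<dots> = b" unfolding h0_def using ec phc b ei psph by simp
    finally show "p (g b) = b" .
  next
    fix b b' assume b: "b \<in> B" and b': "b' \<in> B"
    show "g (b \<oplus> b') = g b \<oplus>\<^bsub>MH\<^esub> g b'"
      unfolding MH_def dsum_add g_def
      by (rule restrict_ext) (use b b' phadd phc eadd g_l_zero[OF agM g_zero_closed[OF agM]] in auto)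
  next
    fix r b assume r: "r \<in> carrier R" and b: "b \<in> B"
    show "g (smult X r b) = smult MH r (g b)"
      unfolding MH_def dsum_smult g_def
      by (rule restrict_ext) (use r b phsm phc esm rmod.sm_zero[OF rmodM r] in auto)
  qed
qed

end

context rmod begin

lemma proj_fg:
  assumes A: "rsubmodule R X A" and C: "rsubmodule R X C" and AC: "A \<inter> C = {\<zero>}"
    and ABC: "\<forall>x\<in>B. \<exists>a\<in>A. \<exists>c\<in>C. x = a \<oplus> c"
    and GB: "finite GB" "GB \<subseteq> B" "rspan R X GB = B" and AB: "A \<subseteq> B"
  shows "\<exists>GA. finite GA \<and> GA \<subseteq> A \<and> rspan R X GA = A"
proof -
  have AX: "A \<subseteq> carrier X" and CX: "C \<subseteq> carrier X" using A C by (auto simp: rsubmodule_def)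
  have "\<forall>g\<in>GB. \<exists>ac. fst ac \<in> A \<and> snd ac \<in> C \<and> g = fst ac \<oplus> snd ac"
  proof
    fix g assume "g \<in> GB"
    then obtain a c where "a \<in> A" "c \<in> C" "g = a \<oplus> c" using ABC GB(2) by blast
    then show "\<exists>ac. fst ac \<in> A \<and> snd ac \<in> C \<and> g = fst ac \<oplus> snd ac" by (intro exI[of _ "(a,c)"]) auto
  qed
  then obtain pr where pr: "\<forall>g\<in>GB. fst (pr g) \<in> A \<and> snd (pr g) \<in> C \<and> g = fst (pr g) \<oplus> snd (pr g)"
    by (rule bchoice[THEN exE]) blast
  define GA where "GA = (\<lambda>g. fst (pr g)) ` GB"
  have GAf: "finite GA" using GB by (simp add: GA_def)
  have GAA: "GA \<subseteq> A" using pr by (auto simp: GA_def)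
  have GAX: "GA \<subseteq> carrier X" using GAA AX by auto
  have sub1: "rspan R X GA \<subseteq> A" by (rule span_least[OF GAf A GAA])
  have spGA: "rsubmodule R X (rspan R X GA)" by (rule span_sub[OF GAf GAX])
  have "A \<subseteq> rspan R X GA"
  proof
    fix a assume a: "a \<in> A"
    have "a \<in> rspan R X GB" using GB(3) AB a by auto
    then obtain c where c: "c \<in> GB \<rightarrow> carrier R" "a = finsum X (\<lambda>g. smult X (c g) g) GB" by (rule rspanE)
    have gX: "fst (pr g) \<in> carrier X" "snd (pr g) \<in> carrier X" if "g \<in> GB" for g using pr that AX CX by auto
    have cR: "c g \<in> carrier R" if "g \<in> GB" for g using c that by auto
    have split: "smult X (c g) g = smult X (c g) (fst (pr g)) \<oplus> smult X (c g) (snd (pr g))" if "g \<in> GB" for g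
    proof -
      have "g = fst (pr g) \<oplus> snd (pr g)" using pr that by auto
      then have "smult X (c g) g = smult X (c g) (fst (pr g) \<oplus> snd (pr g))" by (rule arg_cong)
      then show ?thesis using sm_add gX cR that by simp
    qed
    let ?s1 = "finsum X (\<lambda>g. smult X (c g) (fst (pr g))) GB"
    let ?s2 = "finsum X (\<lambda>g. smult X (c g) (snd (pr g))) GB"
    have "a = finsum X (\<lambda>g. smult X (c g) (fst (pr g)) \<oplus> smult X (c g) (snd (pr g))) GB"
      unfolding c(2) by (intro finsum_cong') (use split gX cR in auto)
    also have "\<dots> = ?s1 \<oplus> ?s2" by (rule finsum_addf) (use gX cR in auto)
    finally have aeq: "a = ?s1 \<oplus> ?s2" .
    have s1: "?s1 \<in> rspan R X GA"
      by (rule submod_finsum[OF spGA GB(1)])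
         (use cR spGA span_gen[OF GAf GAX] in \<open>auto simp: GA_def rsubmodule_def\<close>)
    have s1A: "?s1 \<in> A" using s1 sub1 by auto
    have s2C: "?s2 \<in> C" by (rule submod_finsum[OF C GB(1)]) (use cR pr C in \<open>auto simp: rsubmodule_def\<close>)
    have s1X: "?s1 \<in> carrier X" and s2X: "?s2 \<in> carrier X" using s1A s2C AX CX by auto
    have aX: "a \<in> carrier X" using a AX by auto
    have "?s2 = \<ominus> ?s1 \<oplus> a" using s1X s2X by (simp add: aeq r_neg1)
    moreover have "\<ominus> ?s1 \<oplus> a \<in> A" using A s1A a by (auto simp: rsubmodule_def)
    ultimately have "?s2 = \<zero>" using s2C AC by auto
    then have "a = ?s1" using aeq s1X by simp
    then show "a \<in> rspan R X GA" using s1 by simp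
  qed
  then show ?thesis using GAf GAA sub1 by blast
qed

end


context main begin

lemma dccR: "DCC (right_ideal R)" using artinian by (simp add: artinian_ring_def)

lemma lifts_all: assumes G0: "finite G0" "G0 \<subseteq> carrier X"
  shows "rsubmodule R X B \<longrightarrow> B \<subseteq> rspan R X G0 \<longrightarrow> rfg R (X\<lparr>carrier := B\<rparr>) \<longrightarrow> lifts B"
proof (induction B rule: wf_induct_rule[OF wf_span[OF dccR G0]])
  case (1 B)
  show ?case
  proof (intro impI)
    assume B: "rsubmodule R X B" and BY: "B \<subseteq> rspan R X G0" and fg: "rfg R (X\<lparr>carrier := B\<rparr>)"
    have B0: "\<zero> \<in> B" and BX: "B \<subseteq> carrier X" using B by (auto simp: rsubmodule_def)
    show "lifts B"
    proof (cases "B = {\<zero>}")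
      case True then show ?thesis using lifts_zero by simp
    next
      case nz: False
      show ?thesis
      proof (cases "indecomposable R (X\<lparr>carrier := B\<rparr>)")
        case True then show ?thesis using lifts_indec B fg by blast
      next
        case False
        then obtain A C where A': "rsubmodule R (X\<lparr>carrier := B\<rparr>) A" and C': "rsubmodule R (X\<lparr>carrier := B\<rparr>) C"
          and AC: "A \<inter> C = {\<zero>}" and ABC: "\<forall>x\<in>B. \<exists>a\<in>A. \<exists>c\<in>C. x = a \<oplus> c"
          and Anz: "A \<noteq> {\<zero>}" and Cnz: "C \<noteq> {\<zero>}"
          using nz unfolding indecomposable_def by auto
        have A: "rsubmodule R X A" using submod_sub[OF B A'] .
        have C: "rsubmodule R X C" using submod_sub[OF B C'] .
        have AB: "A \<subseteq> B" and CB: "C \<subseteq> B" using A' C' by (auto simp: rsubmodule_def)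
        have A0: "\<zero> \<in> A" and C0: "\<zero> \<in> C" using A C by (auto simp: rsubmodule_def)
        obtain c where c: "c \<in> C" "c \<noteq> \<zero>" using Cnz C0 by blast
        obtain a where a: "a \<in> A" "a \<noteq> \<zero>" using Anz A0 by blast
        have AsB: "A \<subset> B" using c AC CB AB by blast
        have CsB: "C \<subset> B" using a AC CB AB by blast
        obtain GB where GB: "finite GB" "GB \<subseteq> B" "rspan R X GB = B" using fg rfg_sub[OF B] by blast
        have "\<exists>GA. finite GA \<and> GA \<subseteq> A \<and> rspan R X GA = A"
          by (rule proj_fg[OF A C AC ABC GB AB])
        then have fgA: "rfg R (X\<lparr>carrier := A\<rparr>)" using rfg_sub[OF A] by blast
        have ABC': "\<forall>x\<in>B. \<exists>c\<in>C. \<exists>a\<in>A. x = c \<oplus> a"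
        proof
          fix x assume "x \<in> B"
          then obtain a c where "a \<in> A" "c \<in> C" "x = a \<oplus> c" using ABC by blast
          moreover have "a \<oplus> c = c \<oplus> a" using \<open>a \<in> A\<close> \<open>c \<in> C\<close> AB CB BX by (auto intro: a_comm)
          ultimately show "\<exists>c\<in>C. \<exists>a\<in>A. x = c \<oplus> a" by auto
        qed
        have "\<exists>GC. finite GC \<and> GC \<subseteq> C \<and> rspan R X GC = C"
          by (rule proj_fg[OF C A _ ABC' GB CB]) (use AC in blast)
        then have fgC: "rfg R (X\<lparr>carrier := C\<rparr>)" using rfg_sub[OF C] by blast
        have LA: "lifts A" using 1[of A] AsB A B BY fgA by (auto simp: subrel_def)
        have LC: "lifts C" using 1[of C] CsB C B BY fgC by (auto simp: subrel_def)
        show ?thesis by (rule lifts_sum[OF A C AC B ABC LA LC])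
      qed
    qed
  qed
qed

lemma lifts_span: assumes G0: "finite G0" "G0 \<subseteq> carrier X" shows "lifts (rspan R X G0)"
proof -
  have sp: "rsubmodule R X (rspan R X G0)" by (rule span_sub[OF G0])
  have "G0 \<subseteq> rspan R X G0" using span_gen[OF G0] by blast
  then have "rfg R (X\<lparr>carrier := rspan R X G0\<rparr>)" using rfg_sub[OF sp] G0 by blast
  then show ?thesis using lifts_all[OF G0] sp by blast
qed

end


theorem lemma10:
  fixes R :: "'r ring" and S :: "('r,'a) module \<Rightarrow> bool"
    and Ms :: "nat \<Rightarrow> ('r,'a) module" and n :: nat and X :: "('r,'a) module"
  assumes artinian: "artinian_ring R"
    and S_mod: "\<forall>D. S D \<longrightarrow> rmodule R D"
    and S_sums: "\<forall>(I::'a set) A D. (\<forall>i\<in>I. S (A i)) \<and> rmodule R D \<and> riso R D (dsum R I A) \<longrightarrow> S D"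
    and S_sub: "\<forall>D A. S D \<and> rsubmodule R D A \<longrightarrow> S (D\<lparr>carrier := A\<rparr>)"
    and S_R: "\<exists>D. S D \<and> riso R D (RR R)"
    and Ms_in: "\<forall>i<n. S (Ms i) \<and> rfg R (Ms i) \<and> indecomposable R (Ms i)"
    and Ms_distinct: "\<forall>i<n. \<forall>j<n. i \<noteq> j \<longrightarrow> \<not> riso R (Ms i) (Ms j)"
    and Ms_all: "\<forall>D. S D \<and> rfg R D \<and> indecomposable R D \<longrightarrow> (\<exists>i<n. riso R D (Ms i))"
    and X_in: "S X"
    and M_def: "M = dsum R {..<n} Ms"
    and H_def: "H = rhom R M X"
    and MH_def: "MH = dsum R H (\<lambda>_. M)"
    and p_def: "p = (\<lambda>\<phi>\<in>carrier MH. finsum X (\<lambda>h. h (\<phi> h)) {h\<in>H. \<phi> h \<noteq> \<zero>\<^bsub>M\<^esub>})"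
  shows "p \<in> rhom R MH X \<and> p ` carrier MH = carrier X \<and>
         (\<forall>N :: ('r,'n) module. rfp R N \<longrightarrow>
            (\<forall>f\<in>rhom R N X. \<exists>g\<in>rhom R N MH. \<forall>x\<in>carrier N. p (g x) = f x))"
proof -
  interpret main R S Ms n X M H MH p
    by (rule main.intro) (fact assms)+
  have part1: "p \<in> rhom R MH X" by (rule p_hom)
  have part2: "p ` carrier MH = carrier X"
  proof
    show "p ` carrier MH \<subseteq> carrier X" using part1 by (auto simp: rhom_def)
  next
    show "carrier X \<subseteq> p ` carrier MH"
    proof
      fix x assume x: "x \<in> carrier X"
      have G0: "finite {x}" "{x} \<subseteq> carrier X" using x by auto
      obtain g where g: "\<forall>b\<in>rspan R X {x}. g b \<in> carrier MH" "\<forall>b\<in>rspan R X {x}. p (g b) = b"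
        using lifts_span[OF G0] unfolding lifts_def by blast
      have "x \<in> rspan R X {x}" using span_gen[OF G0] by simp
      then show "x \<in> p ` carrier MH" using g by (metis image_eqI)
    qed
  qed
  have part3: "\<forall>N :: ('r,'n) module. rfp R N \<longrightarrow>
            (\<forall>f\<in>rhom R N X. \<exists>g\<in>rhom R N MH. \<forall>x\<in>carrier N. p (g x) = f x)"
  proof (intro allI impI ballI)
    fix N :: "('r,'n) module" and f
    assume fp: "rfp R N" and f: "f \<in> rhom R N X"
    obtain G where N: "rmodule R N" and G: "finite G" "G \<subseteq> carrier N" "rspan R N G = carrier N"
      using fp unfolding rfp_def by blast
    interpret Nm: rmod R N by (simp add: rmod_def N)
    have fc: "f x \<in> carrier X" if "x \<in> carrier N" for x using f that by (auto simp: rhom_def)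
    have fadd: "f (x \<oplus>\<^bsub>N\<^esub> y) = f x \<oplus>\<^bsub>X\<^esub> f y" if "x \<in> carrier N" "y \<in> carrier N" for x y
      using f that by (auto simp: rhom_def)
    have fsm: "f (smult N r x) = smult X r (f x)" if "r \<in> carrier R" "x \<in> carrier N" for r x
      using f that by (auto simp: rhom_def)
    let ?G' = "f ` G"
    have G': "finite ?G'" "?G' \<subseteq> carrier X" using G fc by auto
    let ?Y = "rspan R X ?G'"
    have Ysub: "rsubmodule R X ?Y" by (rule span_sub[OF G'])
    obtain g where g: "\<forall>b\<in>?Y. g b \<in> carrier MH" "\<forall>b\<in>?Y. \<forall>b'\<in>?Y. g (b \<oplus>\<^bsub>X\<^esub> b') = g b \<oplus>\<^bsub>MH\<^esub> g b'"
      "\<forall>r\<in>carrier R. \<forall>b\<in>?Y. g (smult X r b) = smult MH r (g b)" "\<forall>b\<in>?Y. p (g b) = b"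
      using lifts_span[OF G'] unfolding lifts_def by blast
    have fY: "f x \<in> ?Y" if x: "x \<in> carrier N" for x
    proof -
      have "x \<in> rspan R N G" using G x by simp
      then obtain c where c: "c \<in> G \<rightarrow> carrier R" "x = finsum N (\<lambda>g. smult N (c g) g) G"
        by (rule Nm.rspanE)
      have "f x = finsum X (\<lambda>g. f (smult N (c g) g)) G"
        unfolding c(2) by (rule hom_finsum[OF N rmX f G(1)]) (use c G in \<open>auto simp: Pi_iff subset_iff\<close>)
      also have "\<dots> = finsum X (\<lambda>g. smult X (c g) (f g)) G"
        by (intro finsum_cong') (use c G fsm fc in \<open>auto simp: Pi_iff subset_iff\<close>)
      also have "\<dots> \<in> ?Y"
        by (rule submod_finsum[OF Ysub G(1)])
           (use c Ysub span_gen[OF G'] in \<open>auto simp: rsubmodule_def Pi_iff\<close>)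
      finally show ?thesis .
    qed
    let ?gN = "\<lambda>x\<in>carrier N. g (f x)"
    have "?gN \<in> rhom R N MH" unfolding rhom_def
    proof (intro CollectI conjI ballI)
      show "?gN \<in> carrier N \<rightarrow>\<^sub>E carrier MH" using g fY by auto
    next
      fix x y assume x: "x \<in> carrier N" and y: "y \<in> carrier N"
      have xy: "x \<oplus>\<^bsub>N\<^esub> y \<in> carrier N" using x y by simp
      show "?gN (x \<oplus>\<^bsub>N\<^esub> y) = ?gN x \<oplus>\<^bsub>MH\<^esub> ?gN y"
        using x y xy fadd fY g by simp
    next
      fix r x assume r: "r \<in> carrier R" and x: "x \<in> carrier N"
      have rx: "smult N r x \<in> carrier N" using r x by simp
      show "?gN (smult N r x) = smult MH r (?gN x)"
        using r x rx fsm fY g by simp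
    qed
    moreover have "\<forall>x\<in>carrier N. p (?gN x) = f x" using g fY by simp
    ultimately show "\<exists>g\<in>rhom R N MH. \<forall>x\<in>carrier N. p (g x) = f x" by blast
  qed
  show ?thesis using part1 part2 part3 by blast
qed


end
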